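(* The Hopf algebra $\mathbf{PM}_k$ is freely generated as an algebra by the elements $\mathbf{E}_M$ (resp. $\mathbf{H}_M$) where the $M$ are connected (resp. anti-connected) $k$-packed matrices.
   Context: Let $\mathbb{K}$ be a field of characteristic zero, $k \geq 1$, $A_k := \{0,1,\dots,k\}$. A $k$-packed matrix of size $n$ is an $n \times n$ matrix with entries in $A_k$ with at least one nonzero entry in each row and each column; $\mathcal{P}_k$ denotes the set of all of them ($\emptyset$ has size $0$). $\mathbf{PM}_k$ is the vector space with basis $(\mathbf{F}_M)_{M \in \mathcal{P}_k}$, with product $\mathbf{F}_{M_1} \cdot \mathbf{F}_{M_2} = \sum_{M \in \mathrm{Sh}_c(M_1,M_2)} \mathbf{F}_M$, where, for $M_1, M_2$ of sizes $n_1, n_2$, $\mathrm{Sh}_c(M_1,M_2)$ is the set of matrices obtained by shuffling the columns of $M_1$ with an $n_2 \times n_1$ zero block placed below it, with the columns of $M_2$ with an $n_1 \times n_2$ zero block placed above it; and with coproduct $\Delta(\mathbf{F}_M) = \sum_{M = [M_1|M_2]} \mathbf{F}_{\operatorname{cp}(M_1)} \otimes \mathbf{F}_{\operatorname{cp}(M_2)}$, the sum over splittings of $M$ into a left block $M_1$ and right block $M_2$ of columns such that the compressions $\operatorname{cp}(M_i)$ (deletion of null rows and columns) are square. For $k$-packed $M_1, M_2$ of sizes $n_1, n_2$, define the over operation $\mathrm{ov}(M_1, M_2) := \begin{pmatrix} M_1 & 0 \\ 0 & M_2 \end{pmatrix}$ and the under operation $\mathrm{un}(M_1,M_2) := \begin{pmatrix}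 0 & M_1 \\ M_2 & 0 \end{pmatrix}$ (zero blocks of sizes $n_1\times n_2$ and $n_2 \times n_1$). A $k$-packed matrix $M \ne \emptyset$ is connected (resp. anti-connected) if $M = \mathrm{ov}(M_1,M_2)$ (resp. $M = \mathrm{un}(M_1,M_2)$) with $M_1, M_2$ $k$-packed implies $M_1 = M$ or $M_2 = M$. Define a relation $\to$ on $k$-packed matrices of size $n$: $M_1 \to M_2$ if there is $i \in [n-1]$ such that, with $s$ the number of $0$ ending the $i$th column of $M_1$ and $p$ the number of $0$ starting its $(i+1)$st column, $s + p \geq n$ and $M_2$ is obtained from $M_1$ by exchanging its $i$th and $(i+1)$st columns. Let $\leq_{\mathrm{M}}$ be the reflexive and transitive closure of $\to$. Set $\mathbf{E}_M := \sum_{M \leq_{\mathrm{M}} M'} \mathbf{F}_{M'}$ and $\mathbf{H}_M := \sum_{M' \leq_{\mathrm{M}} M} \mathbf{F}_{M'}$ (these are bases of $\mathbf{PM}_k$, and satisfy $\mathbf{E}_{M_1}\cdot\mathbf{E}_{M_2} = \mathbf{E}_{\mathrm{ov}(M_1,M_2)}$, $\mathbf{H}_{M_1}\cdot\mathbf{H}_{M_2} = \mathbf{H}_{\mathrm{un}(M_1,M_2)}$). *)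

theory Defs
  imports Main
begin

text \<open>Matrices are represented as lists of rows (nat list list); an n x n matrix
  is a list of n rows each of length n. The empty matrix is [].\<close>

definition packed :: "nat \<Rightarrow> nat list list \<Rightarrow> bool" where
  "packed k M \<longleftrightarrow>
     (\<forall>r\<in>set M. length r = length M \<and> (\<forall>x\<in>set r. x \<le> k) \<and> (\<exists>x\<in>set r. x \<noteq> 0)) \<and>
     (\<forall>j<length M. \<exists>r\<in>set M. r ! j \<noteq> 0)"

definition col :: "nat list list \<Rightarrow> nat \<Rightarrow> nat list" where
  "col M j = map (\<lambda>r. r ! j) M"

definition cols :: "nat list list \<Rightarrow> nat list list" where
  "cols M = map (col M) [0..<length M]"

definition Sh_c :: "nat list list \<Rightarrow> nat list list \<Rightarrow> nat list list set" where
  "Sh_c M1 M2 = transpose ` shuffles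
      (map (\<lambda>c. c @ replicate (length M2) 0) (cols M1))
      (map (\<lambda>c. replicate (length M1) 0 @ c) (cols M2))"

definition ov :: "nat list list \<Rightarrow> nat list list \<Rightarrow> nat list list" where
  "ov M1 M2 = map (\<lambda>r. r @ replicate (length M2) 0) M1 @
              map (\<lambda>r. replicate (length M1) 0 @ r) M2"

definition un :: "nat list list \<Rightarrow> nat list list \<Rightarrow> nat list list" where
  "un M1 M2 = map (\<lambda>r. replicate (length M2) 0 @ r) M1 @
              map (\<lambda>r. r @ replicate (length M1) 0) M2"

definition connected_pm :: "nat \<Rightarrow> nat list list \<Rightarrow> bool" where
  "connected_pm k M \<longleftrightarrow> M \<noteq> [] \<and>
     (\<forall>M1 M2. packed k M1 \<and> packed k M2 \<and> M = ov M1 M2 \<longrightarrow> M1 = M \<or> M2 = M)"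

definition anticonnected_pm :: "nat \<Rightarrow> nat list list \<Rightarrow> bool" where
  "anticonnected_pm k M \<longleftrightarrow> M \<noteq> [] \<and>
     (\<forall>M1 M2. packed k M1 \<and> packed k M2 \<and> M = un M1 M2 \<longrightarrow> M1 = M \<or> M2 = M)"

definition swap_cols :: "nat \<Rightarrow> nat list list \<Rightarrow> nat list list" where
  "swap_cols i M = map (\<lambda>r. r[i := r ! Suc i, Suc i := r ! i]) M"

definition mstep :: "nat \<Rightarrow> nat list list \<Rightarrow> nat list list \<Rightarrow> bool" where
  "mstep k A B \<longleftrightarrow> packed k A \<and> packed k B \<and>
     (\<exists>i. Suc i < length A \<and>
        length (takeWhile (\<lambda>x. x = 0) (rev (col A i)))
          + length (takeWhile (\<lambda>x. x = 0) (col A (Suc i))) \<ge> length A \<and>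
        B = swap_cols i A)"

definition le_M :: "nat \<Rightarrow> nat list list \<Rightarrow> nat list list \<Rightarrow> bool" where
  "le_M k = (mstep k)\<^sup>*\<^sup>*"

text \<open>Elements of PM_k: finitely supported functions from matrices to the field,
  supported on k-packed matrices (coordinates in the basis F_M).\<close>
definition PM :: "nat \<Rightarrow> (nat list list \<Rightarrow> 'a::field) set" where
  "PM k = {x. finite {M. x M \<noteq> 0} \<and> (\<forall>M. x M \<noteq> 0 \<longrightarrow> packed k M)}"

definition F :: "nat list list \<Rightarrow> nat list list \<Rightarrow> 'a::field" where
  "F M = (\<lambda>M'. if M' = M then 1 else 0)"

definition pm_mult :: "(nat list list \<Rightarrow> 'a::field) \<Rightarrow> (nat list list \<Rightarrow> 'a) \<Rightarrow> nat list list \<Rightarrow> 'a" where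
  "pm_mult x y = (\<lambda>M. \<Sum>M1\<in>{M. x M \<noteq> 0}. \<Sum>M2\<in>{M. y M \<noteq> 0}.
      x M1 * y M2 * (if M \<in> Sh_c M1 M2 then 1 else 0))"

definition E :: "nat \<Rightarrow> nat list list \<Rightarrow> nat list list \<Rightarrow> 'a::field" where
  "E k M = (\<lambda>M'. if packed k M \<and> le_M k M M' then 1 else 0)"

definition H :: "nat \<Rightarrow> nat list list \<Rightarrow> nat list list \<Rightarrow> 'a::field" where
  "H k M = (\<lambda>M'. if packed k M \<and> le_M k M' M then 1 else 0)"

definition monomial :: "(nat list list \<Rightarrow> nat list list \<Rightarrow> 'a::field) \<Rightarrow> nat list list list
    \<Rightarrow> nat list list \<Rightarrow> 'a" where
  "monomial g w = foldr (\<lambda>M acc. pm_mult (g M) acc) w (F [])"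

text \<open>The algebra PM_k is freely generated (as an associative unital algebra) by the
  family g indexed by S: the noncommutative monomials in the generators form a basis.\<close>
definition freely_generates ::
    "nat \<Rightarrow> (nat list list \<Rightarrow> nat list list \<Rightarrow> 'a::field) \<Rightarrow> nat list list set \<Rightarrow> bool" where
  "freely_generates k g S \<longleftrightarrow>
     (\<forall>W c. finite W \<and> W \<subseteq> lists S \<and> (\<forall>M. (\<Sum>w\<in>W. c w * monomial g w M) = 0)
        \<longrightarrow> (\<forall>w\<in>W. c w = 0)) \<and>
     (\<forall>x\<in>PM k. \<exists>W c. finite W \<and> W \<subseteq> lists S \<and> x = (\<lambda>M. \<Sum>w\<in>W. c w * monomial g w M))"

end

theory Submission
  imports Defs
begin


definition sqm :: "nat \<Rightarrow> 'b list list \<Rightarrow> bool" where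
  "sqm n M \<longleftrightarrow> length M = n \<and> (\<forall>r\<in>set M. length r = n)"

lemma packed_sqm: "packed k M \<Longrightarrow> sqm (length M) M"
  by (simp add: packed_def sqm_def)

lemma transpose_sqm_nth:
  assumes "sqm n M" "j < n"
  shows "transpose M ! j = col M j"
proof -
  have "transpose M = map (\<lambda>i. map (\<lambda>j. M ! j ! i) [0..<length M]) [0..<n]"
    using assms by (intro transpose_rectangle) (auto simp: sqm_def)
  moreover have "col M j = map (\<lambda>i. M ! i ! j) [0..<length M]"
    unfolding col_def by (rule nth_equalityI) auto
  ultimately show ?thesis using assms by simp
qed

lemma length_transpose_sqm: "sqm n M \<Longrightarrow> length (transpose M) = n"
proof -
  assume a: "sqm n M"
  have "transpose M = map (\<lambda>i. map (\<lambda>j. M ! j ! i) [0..<length M]) [0..<n]"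
    using a by (intro transpose_rectangle) (auto simp: sqm_def)
  thus ?thesis by simp
qed

lemma sqm_transpose: "sqm n M \<Longrightarrow> sqm n (transpose M)"
proof -
  assume a: "sqm n M"
  have "transpose M = map (\<lambda>i. map (\<lambda>j. M ! j ! i) [0..<length M]) [0..<n]"
    using a by (intro transpose_rectangle) (auto simp: sqm_def)
  thus ?thesis using a by (auto simp: sqm_def)
qed

lemma transpose_transpose_sqm: "sqm n M \<Longrightarrow> transpose (transpose M) = M"
proof -
  assume a: "sqm n M"
  have s: "sorted (rev (map length M))"
    using a by (auto simp: sqm_def sorted_iff_nth_mono rev_nth)
  have "takeWhile (\<lambda>x. x \<noteq> []) M = M"
  proof (cases "n = 0")
    case True thus ?thesis using a by (auto simp: sqm_def)
  next
    case False thus ?thesis using a by (auto simp: sqm_def intro!: takeWhile_eq_all_conv[THEN iffD2])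
  qed
  thus ?thesis using transpose_transpose[OF s] by simp
qed

lemma nth_nth_transpose_sqm: "sqm n (M::nat list list) \<Longrightarrow> i < n \<Longrightarrow> j < n \<Longrightarrow> transpose M ! i ! j = M ! j ! i"
  using transpose_sqm_nth[of n M i] by (simp add: col_def sqm_def)

lemma packed_idx:
  assumes "sqm n M"
  shows "packed k M \<longleftrightarrow>
     (\<forall>i<n. \<forall>j<n. M!i!j \<le> k) \<and> (\<forall>i<n. \<exists>j<n. M!i!j \<noteq> 0) \<and> (\<forall>j<n. \<exists>i<n. M!i!j \<noteq> 0)"
proof -
  have L: "length M = n" "\<And>i. i < n \<Longrightarrow> length (M!i) = n" using assms by (auto simp: sqm_def)
  have A: "(\<forall>r\<in>set M. \<forall>x\<in>set r. x \<le> k) \<longleftrightarrow> (\<forall>i<n. \<forall>j<n. M!i!j \<le> k)"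
    using L by (auto simp: all_set_conv_all_nth)
  have B: "(\<forall>r\<in>set M. \<exists>x\<in>set r. x \<noteq> 0) \<longleftrightarrow> (\<forall>i<n. \<exists>j<n. M!i!j \<noteq> 0)"
  proof -
    have "(\<exists>x\<in>set (M!i). x \<noteq> 0) \<longleftrightarrow> (\<exists>j<n. M!i!j \<noteq> 0)" if "i < n" for i
      using L(2)[OF that] by (auto simp: in_set_conv_nth) (use nth_mem in blast)
    thus ?thesis using L(1) by (simp add: all_set_conv_all_nth)
  qed
  have C: "(\<forall>j<length M. \<exists>r\<in>set M. r ! j \<noteq> 0) \<longleftrightarrow> (\<forall>j<n. \<exists>i<n. M!i!j \<noteq> 0)"
  proof -
    have "(\<exists>r\<in>set M. r!j \<noteq> 0) \<longleftrightarrow> (\<exists>i<n. M!i!j \<noteq> 0)" for j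
      using L(1) by (auto simp: in_set_conv_nth) (use nth_mem in blast)
    thus ?thesis using L(1) by simp
  qed
  have Len: "\<forall>r\<in>set M. length r = length M" using assms by (simp add: sqm_def)
  show ?thesis unfolding packed_def ball_conj_distrib A B C using Len by blast
qed

lemma packed_transpose: "packed k M \<Longrightarrow> packed k (transpose M)"
proof -
  assume p: "packed k M"
  define n where "n = length M"
  have s: "sqm n M" using packed_sqm[OF p] n_def by simp
  have s2: "sqm n (transpose M)" using sqm_transpose[OF s] .
  have e: "\<And>i j. i < n \<Longrightarrow> j < n \<Longrightarrow> transpose M ! i ! j = M ! j ! i"
    using nth_nth_transpose_sqm[OF s] by blast
  from p have a: "\<forall>i<n. \<forall>j<n. M!i!j \<le> k" "\<forall>i<n. \<exists>j<n. M!i!j \<noteq> 0" "\<forall>j<n. \<exists>i<n. M!i!j \<noteq> 0"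
    unfolding packed_idx[OF s] by auto
  show ?thesis unfolding packed_idx[OF s2]
  proof (intro conjI allI impI)
    fix i j assume "i < n" "j < n" thus "transpose M ! i ! j \<le> k" using a(1) e by simp
  next
    fix i assume i: "i < n"
    obtain j where "j < n" "M!j!i \<noteq> 0" using a(3) i by blast
    thus "\<exists>j<n. transpose M ! i ! j \<noteq> 0" using e i by auto
  next
    fix j assume j: "j < n"
    obtain i where "i < n" "M!j!i \<noteq> 0" using a(2) j by blast
    thus "\<exists>i<n. transpose M ! i ! j \<noteq> 0" using e j by auto
  qed
qed

lemma packed_set_eq: assumes "packed k C" "set D = set C" "length D = length C" shows "packed k D"
  using assms(1) unfolding packed_def assms(2,3) .



definition lz :: "nat list \<Rightarrow> nat" where "lz c = length (takeWhile (\<lambda>x. x = 0) c)"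
definition tz :: "nat list \<Rightarrow> nat" where "tz c = length (takeWhile (\<lambda>x. x = 0) (rev c))"
definition above :: "nat \<Rightarrow> nat list \<Rightarrow> nat list \<Rightarrow> bool" where
  "above n c d \<longleftrightarrow> n \<le> tz c + lz d"
definition cstep :: "nat \<Rightarrow> nat list list \<Rightarrow> nat list list \<Rightarrow> bool" where
  "cstep n xs ys \<longleftrightarrow> (\<exists>u c d v. xs = u @ c # d # v \<and> ys = u @ d # c # v \<and> above n c d)"

lemma cstep_set: "cstep n xs ys \<Longrightarrow> set ys = set xs"
  unfolding cstep_def by auto

lemma cstep_length: "cstep n xs ys \<Longrightarrow> length ys = length xs"
  unfolding cstep_def by auto

lemma csteps_set: "(cstep n)\<^sup>*\<^sup>* xs ys \<Longrightarrow> set ys = set xs"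
  by (induction rule: rtranclp_induct) (auto dest: cstep_set)

lemma csteps_length: "(cstep n)\<^sup>*\<^sup>* xs ys \<Longrightarrow> length ys = length xs"
  by (induction rule: rtranclp_induct) (auto dest: cstep_length)

lemma sqm_swap_cols: "sqm n A \<Longrightarrow> sqm n (swap_cols i A)"
  by (auto simp: sqm_def swap_cols_def)

lemma transpose_swap_cols:
  assumes s: "sqm n (A::nat list list)" and i: "Suc i < n"
  shows "transpose (swap_cols i A) =
     take i (transpose A) @ transpose A ! Suc i # transpose A ! i # drop (Suc (Suc i)) (transpose A)"
proof -
  have s2: "sqm n (swap_cols i A)" using sqm_swap_cols[OF s] .
  have lt: "length (transpose A) = n" using length_transpose_sqm[OF s] .
  show ?thesis
  proof (rule nth_equalityI)
    show "length (transpose (swap_cols i A)) = length (take i (transpose A) @ transpose A ! Suc i # transpose A ! i # drop (Suc (Suc i)) (transpose A))"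
      using length_transpose_sqm[OF s2] lt i by simp
  next
    fix j assume j: "j < length (transpose (swap_cols i A))"
    hence jn: "j < n" using length_transpose_sqm[OF s2] by simp
    have L: "transpose (swap_cols i A) ! j = col (swap_cols i A) j" using transpose_sqm_nth[OF s2 jn] .
    have col_sw: "col (swap_cols i A) j = col A (if j = i then Suc i else if j = Suc i then i else j)"
      unfolding col_def swap_cols_def using s i jn
      by (auto simp: sqm_def nth_list_update intro!: map_cong)
    have R: "(take i (transpose A) @ transpose A ! Suc i # transpose A ! i # drop (Suc (Suc i)) (transpose A)) ! j
        = transpose A ! (if j = i then Suc i else if j = Suc i then i else j)"
      using jn i lt by (auto simp: nth_append min_def nth_Cons' not_less numeral_2_eq_2 Suc_diff_Suc)
    show "transpose (swap_cols i A) ! j = (take i (transpose A) @ transpose A ! Suc i # transpose A ! i # drop (Suc (Suc i)) (transpose A)) ! j"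
      unfolding L R col_sw using transpose_sqm_nth[OF s] jn i by auto
  qed
qed

lemma mstep_cstep:
  assumes p: "packed k A"
  shows "mstep k A B \<longleftrightarrow> packed k B \<and> cstep (length A) (transpose A) (transpose B)"
proof -
  define n where "n = length A"
  have s: "sqm n A" using packed_sqm[OF p] n_def by simp
  have lt: "length (transpose A) = n" using length_transpose_sqm[OF s] .
  show ?thesis
  proof
    assume "mstep k A B"
    then obtain i where pB: "packed k B" and i: "Suc i < n"
      and ab: "length (takeWhile (\<lambda>x. x = 0) (rev (col A i)))
          + length (takeWhile (\<lambda>x. x = 0) (col A (Suc i))) \<ge> n" and B: "B = swap_cols i A"
      unfolding mstep_def n_def by blast
    define C where "C = transpose A"
    have dec: "C = take i C @ C ! i # C ! Suc i # drop (Suc (Suc i)) C"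
      using i lt unfolding C_def
      by (metis Cons_nth_drop_Suc Suc_lessD append_take_drop_id)
    have "above n (C ! i) (C ! Suc i)"
      unfolding above_def tz_def lz_def C_def using ab transpose_sqm_nth[OF s] i by simp
    moreover have "transpose B = take i C @ C ! Suc i # C ! i # drop (Suc (Suc i)) C"
      unfolding B C_def using transpose_swap_cols[OF s i] .
    ultimately have "cstep n C (transpose B)" unfolding cstep_def using dec by blast
    thus "packed k B \<and> cstep (length A) (transpose A) (transpose B)" using pB C_def n_def by simp
  next
    assume "packed k B \<and> cstep (length A) (transpose A) (transpose B)"
    then obtain u c d v where pB: "packed k B" and e1: "transpose A = u @ c # d # v"
      and e2: "transpose B = u @ d # c # v" and ab: "above n c d"
      unfolding cstep_def n_def by blast
    define i where "i = length u"
    have i: "Suc i < n" using lt e1 i_def by simp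
    have ci: "col A i = c" using transpose_sqm_nth[OF s, of i] i e1 i_def by simp
    have di: "col A (Suc i) = d" using transpose_sqm_nth[OF s, of "Suc i"] i e1 i_def by (simp add: nth_append)
    have "transpose (swap_cols i A) = u @ d # c # v"
      using transpose_swap_cols[OF s i] e1 i_def by (simp add: nth_append)
    hence "transpose (swap_cols i A) = transpose B" using e2 by simp
    hence "swap_cols i A = B"
      using transpose_transpose_sqm[OF sqm_swap_cols[OF s]] transpose_transpose_sqm[OF packed_sqm[OF pB]]
      by metis
    thus "mstep k A B" unfolding mstep_def using p pB i ab ci di n_def
      by (auto simp: above_def tz_def lz_def)
  qed
qed

lemma packed_csteps: "packed k C \<Longrightarrow> (cstep n)\<^sup>*\<^sup>* C D \<Longrightarrow> packed k D"
  using packed_set_eq csteps_set csteps_length by metis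

lemma packed_csteps_back: "packed k C \<Longrightarrow> (cstep n)\<^sup>*\<^sup>* D C \<Longrightarrow> packed k D"
  using packed_set_eq csteps_set csteps_length by metis

lemma le_M_up:
  assumes p: "packed k A"
  shows "le_M k A B \<longleftrightarrow> (\<exists>C. (cstep (length A))\<^sup>*\<^sup>* (transpose A) C \<and> B = transpose C)"
proof
  assume "le_M k A B"
  thus "\<exists>C. (cstep (length A))\<^sup>*\<^sup>* (transpose A) C \<and> B = transpose C"
    unfolding le_M_def
  proof (induction rule: rtranclp_induct)
    case base
    thus ?case using transpose_transpose_sqm[OF packed_sqm[OF p]] by auto
  next
    case (step B B')
    obtain C where C: "(cstep (length A))\<^sup>*\<^sup>* (transpose A) C" "B = transpose C" using step.IH by blast
    have pC: "packed k C" using packed_csteps[OF packed_transpose[OF p] C(1)] .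
    have pB: "packed k B" using step.hyps(2) unfolding mstep_def by blast
    have tB: "transpose B = C" using C(2) transpose_transpose_sqm[OF packed_sqm[OF pC]] by simp
    have lB: "length B = length A"
      using C(2) length_transpose_sqm[OF packed_sqm[OF pC]] csteps_length[OF C(1)]
        length_transpose_sqm[OF packed_sqm[OF p]] by simp
    have "packed k B' \<and> cstep (length B) (transpose B) (transpose B')"
      using mstep_cstep[OF pB] step.hyps(2) by blast
    hence "(cstep (length A))\<^sup>*\<^sup>* (transpose A) (transpose B')" and "B' = transpose (transpose B')"
      using C(1) tB lB transpose_transpose_sqm[OF packed_sqm] by auto
    thus ?case by blast
  qed
next
  assume "\<exists>C. (cstep (length A))\<^sup>*\<^sup>* (transpose A) C \<and> B = transpose C"
  then obtain C where C: "(cstep (length A))\<^sup>*\<^sup>* (transpose A) C" "B = transpose C" by blast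
  have "le_M k A (transpose C)" using C(1)
  proof (induction rule: rtranclp_induct)
    case base
    thus ?case using transpose_transpose_sqm[OF packed_sqm[OF p]] by (simp add: le_M_def)
  next
    case (step D D')
    have pD: "packed k D" using packed_csteps[OF packed_transpose[OF p] step.hyps(1)] .
    have pD': "packed k D'" using packed_csteps[OF pD r_into_rtranclp[of "cstep (length A)", OF step.hyps(2)]] .
    have ptD: "packed k (transpose D)" using packed_transpose[OF pD] .
    have ptD': "packed k (transpose D')" using packed_transpose[OF pD'] .
    have lD: "length (transpose D) = length A"
      using length_transpose_sqm[OF packed_sqm[OF pD]] csteps_length[OF step.hyps(1)]
        length_transpose_sqm[OF packed_sqm[OF p]] by simp
    have "mstep k (transpose D) (transpose D')"
      unfolding mstep_cstep[OF ptD] using ptD' lD step.hyps(2)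
        transpose_transpose_sqm[OF packed_sqm[OF pD]] transpose_transpose_sqm[OF packed_sqm[OF pD']]
      by simp
    thus ?case using step.IH unfolding le_M_def by simp
  qed
  thus "le_M k A B" using C(2) by simp
qed

lemma le_M_packed: "le_M k A B \<Longrightarrow> packed k A \<Longrightarrow> packed k B"
  unfolding le_M_def by (induction rule: rtranclp_induct) (auto simp: mstep_def)

lemma le_M_packed_back: "le_M k A B \<Longrightarrow> packed k B \<Longrightarrow> packed k A"
  unfolding le_M_def by (induction rule: converse_rtranclp_induct) (auto simp: mstep_def)

lemma le_M_down:
  assumes p: "packed k B"
  shows "le_M k A B \<longleftrightarrow> (\<exists>C. (cstep (length B))\<^sup>*\<^sup>* C (transpose B) \<and> A = transpose C)"
proof
  assume a: "le_M k A B"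
  have pA: "packed k A" using le_M_packed_back[OF a p] .
  obtain C where C: "(cstep (length A))\<^sup>*\<^sup>* (transpose A) C" "B = transpose C"
    using a le_M_up[OF pA] by blast
  have pC: "packed k C" using packed_csteps[OF packed_transpose[OF pA] C(1)] .
  have "length B = length A"
    using C(2) length_transpose_sqm[OF packed_sqm[OF pC]] csteps_length[OF C(1)]
        length_transpose_sqm[OF packed_sqm[OF pA]] by simp
  moreover have "transpose B = C" using C(2) transpose_transpose_sqm[OF packed_sqm[OF pC]] by simp
  ultimately show "\<exists>C. (cstep (length B))\<^sup>*\<^sup>* C (transpose B) \<and> A = transpose C"
    using C(1) transpose_transpose_sqm[OF packed_sqm[OF pA]] by metis
next
  assume "\<exists>C. (cstep (length B))\<^sup>*\<^sup>* C (transpose B) \<and> A = transpose C"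
  then obtain C where C: "(cstep (length B))\<^sup>*\<^sup>* C (transpose B)" "A = transpose C" by blast
  have pC: "packed k C" using packed_csteps_back[OF packed_transpose[OF p] C(1)] .
  have pA: "packed k A" using C(2) packed_transpose[OF pC] by simp
  have tA: "transpose A = C" using C(2) transpose_transpose_sqm[OF packed_sqm[OF pC]] by simp
  have lA: "length A = length B"
    using C(2) length_transpose_sqm[OF packed_sqm[OF pC]] csteps_length[OF C(1)]
        length_transpose_sqm[OF packed_sqm[OF p]] by simp
  show "le_M k A B" unfolding le_M_up[OF pA] tA lA
    using C(1) transpose_transpose_sqm[OF packed_sqm[OF p]] by metis
qed



definition padB :: "nat \<Rightarrow> nat list \<Rightarrow> nat list" where "padB m c = c @ replicate m 0"
definition padA :: "nat \<Rightarrow> nat list \<Rightarrow> nat list" where "padA m c = replicate m 0 @ c"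
definition nz :: "nat list \<Rightarrow> bool" where "nz c \<longleftrightarrow> (\<exists>x\<in>set c. x \<noteq> 0)"
definition good :: "nat \<Rightarrow> nat list list \<Rightarrow> bool" where
  "good n cs \<longleftrightarrow> (\<forall>c\<in>set cs. length c = n \<and> nz c)"

lemma takeWhile_rep0: "takeWhile (\<lambda>x. x = 0) (replicate m (0::nat) @ ys) = replicate m 0 @ takeWhile (\<lambda>x. x = 0) ys"
  by (induction m) auto

lemma lz_padA: "lz (padA m c) = m + lz c"
  unfolding lz_def padA_def by (simp add: takeWhile_rep0)

lemma tz_padB: "tz (padB m c) = m + tz c"
  unfolding tz_def padB_def by (simp add: takeWhile_rep0)

lemma length_takeWhile_append_ge: "length (takeWhile P xs) \<le> length (takeWhile P (xs @ ys))"
  by (induction xs) auto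

lemma lz_padB_ge: "lz c \<le> lz (padB m c)"
  unfolding lz_def padB_def by (rule length_takeWhile_append_ge)

lemma tz_padA_ge: "tz c \<le> tz (padA m c)"
  unfolding tz_def padA_def by (simp add: length_takeWhile_append_ge)

lemma nz_takeWhile: "nz c \<Longrightarrow> takeWhile (\<lambda>x. x = 0) (c @ ys) = takeWhile (\<lambda>x. x = 0) c"
  unfolding nz_def by (meson takeWhile_append1)

lemma lz_padB: "nz c \<Longrightarrow> lz (padB m c) = lz c"
  unfolding lz_def padB_def by (simp add: nz_takeWhile)

lemma nz_rev: "nz (rev c) = nz c" unfolding nz_def by simp

lemma tz_padA: "nz c \<Longrightarrow> tz (padA m c) = tz c"
  unfolding tz_def padA_def using nz_takeWhile[of "rev c"] nz_rev by simp

lemma lz_tz_less: "nz c \<Longrightarrow> lz c + tz c < length c"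
proof -
  assume "nz c"
  then obtain ys x zs where c: "c = ys @ x # zs" "x \<noteq> 0" "\<forall>y\<in>set ys. y = 0"
    unfolding nz_def using split_list_first_prop[of c "\<lambda>x. x \<noteq> 0"] by blast
  have "lz c = length ys" unfolding lz_def c(1) using c(2,3) by (simp add: takeWhile_append2)
  moreover have "tz c \<le> length zs"
  proof -
    have gen: "\<not> P x \<Longrightarrow> length (takeWhile P (as @ x # w)) \<le> length as" for P as w
      by (induction as) auto
    have "rev c = rev zs @ x # rev ys" unfolding c(1) by simp
    thus ?thesis unfolding tz_def using gen[of "\<lambda>x. x = 0" "rev zs" "rev ys"] c(2) by simp
  qed
  ultimately show ?thesis unfolding c(1) by simp
qed

lemma lz_rev_tz: "lz (rev c) = tz c" "tz (rev c) = lz c"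
  unfolding lz_def tz_def by simp_all

lemma above_rev: "above n c d \<longleftrightarrow> above n (rev d) (rev c)"
  unfolding above_def by (simp add: lz_rev_tz add.commute)

lemma cstep_rev: "cstep n xs ys \<longleftrightarrow> cstep n (map rev ys) (map rev xs)"
proof
  assume "cstep n xs ys"
  then obtain u c d v where "xs = u @ c # d # v" "ys = u @ d # c # v" "above n c d"
    unfolding cstep_def by blast
  thus "cstep n (map rev ys) (map rev xs)" unfolding cstep_def
    by (intro exI[of _ "map rev u"] exI[of _ "rev d"] exI[of _ "rev c"] exI[of _ "map rev v"])
      (simp add: above_rev[symmetric])
next
  assume "cstep n (map rev ys) (map rev xs)"
  then obtain u c d v where e: "map rev ys = u @ c # d # v" "map rev xs = u @ d # c # v" "above n c d"
    unfolding cstep_def by blast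
  have "ys = map rev (map rev ys)" "xs = map rev (map rev xs)" by (simp_all add: comp_def)
  hence "ys = map rev u @ rev c # rev d # map rev v" "xs = map rev u @ rev d # rev c # map rev v"
    using e by simp_all
  moreover have "above n (rev d) (rev c)" using e(3) above_rev by simp
  ultimately show "cstep n xs ys" unfolding cstep_def by blast
qed

lemma csteps_rev: "(cstep n)\<^sup>*\<^sup>* xs ys \<longleftrightarrow> (cstep n)\<^sup>*\<^sup>* (map rev ys) (map rev xs)"
proof -
  have A: "(cstep n)\<^sup>*\<^sup>* (map rev ys) (map rev xs)" if "(cstep n)\<^sup>*\<^sup>* xs ys" for xs ys
    using that
  proof (induction rule: rtranclp_induct)
    case (step y z)
    have "cstep n (map rev z) (map rev y)" using step.hyps(2) cstep_rev by blast
    thus ?case using step.IH by (meson converse_rtranclp_into_rtranclp)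
  qed simp
  show ?thesis using A[of xs ys] A[of "map rev ys" "map rev xs"] by (auto simp: comp_def)
qed

lemma cstep_prefix: "cstep n xs ys \<Longrightarrow> cstep n (w @ xs) (w @ ys)"
  unfolding cstep_def by (metis append.assoc)

lemma csteps_prefix: "(cstep n)\<^sup>*\<^sup>* xs ys \<Longrightarrow> (cstep n)\<^sup>*\<^sup>* (w @ xs) (w @ ys)"
  by (induction rule: rtranclp_induct) (auto intro: rtranclp.rtrancl_into_rtrancl cstep_prefix)

lemma cstep_suffix: "cstep n xs ys \<Longrightarrow> cstep n (xs @ w) (ys @ w)"
  unfolding cstep_def by fastforce

lemma csteps_suffix: "(cstep n)\<^sup>*\<^sup>* xs ys \<Longrightarrow> (cstep n)\<^sup>*\<^sup>* (xs @ w) (ys @ w)"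
  by (induction rule: rtranclp_induct) (auto intro: rtranclp.rtrancl_into_rtrancl cstep_suffix)

lemma csteps_padB:
  assumes "(cstep n1)\<^sup>*\<^sup>* as as'"
  shows "(cstep (n1 + n2))\<^sup>*\<^sup>* (map (padB n2) as) (map (padB n2) as')"
  using assms
proof (induction rule: rtranclp_induct)
  case (step y z)
  obtain u c d v where e: "y = u @ c # d # v" "z = u @ d # c # v" "above n1 c d"
    using step.hyps(2) unfolding cstep_def by blast
  have "above (n1 + n2) (padB n2 c) (padB n2 d)"
    using e(3) tz_padB[of n2 c] lz_padB_ge[of d n2] unfolding above_def by simp
  hence "cstep (n1 + n2) (map (padB n2) y) (map (padB n2) z)"
    unfolding cstep_def e by auto
  thus ?case using step.IH by simp
qed simp

lemma csteps_padA:
  assumes "(cstep n2)\<^sup>*\<^sup>* bs bs'"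
  shows "(cstep (n1 + n2))\<^sup>*\<^sup>* (map (padA n1) bs) (map (padA n1) bs')"
  using assms
proof (induction rule: rtranclp_induct)
  case (step y z)
  obtain u c d v where e: "y = u @ c # d # v" "z = u @ d # c # v" "above n2 c d"
    using step.hyps(2) unfolding cstep_def by blast
  have "above (n1 + n2) (padA n1 c) (padA n1 d)"
    using e(3) lz_padA[of n1 d] tz_padA_ge[of c n1] unfolding above_def by simp
  hence "cstep (n1 + n2) (map (padA n1) y) (map (padA n1) z)"
    unfolding cstep_def e by auto
  thus ?case using step.IH by simp
qed simp

lemma move_left:
  assumes "\<forall>x\<in>set xs. above n x y"
  shows "(cstep n)\<^sup>*\<^sup>* (xs @ y # ys) (y # xs @ ys)"
  using assms
proof (induction xs)
  case (Cons x xs)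
  have "(cstep n)\<^sup>*\<^sup>* ([x] @ (xs @ y # ys)) ([x] @ (y # xs @ ys))"
    using Cons by (intro csteps_prefix) simp
  moreover have "cstep n (x # y # xs @ ys) (y # x # xs @ ys)"
    unfolding cstep_def using Cons.prems
    by (intro exI[of _ "[]"] exI[of _ x] exI[of _ y] exI[of _ "xs @ ys"]) auto
  ultimately show ?case by (simp add: rtranclp.rtrancl_into_rtrancl)
qed simp

lemma shuffle_reach:
  assumes "\<forall>x\<in>set xs. \<forall>y\<in>set ys. above n x y" "zs \<in> shuffles xs ys"
  shows "(cstep n)\<^sup>*\<^sup>* (xs @ ys) zs"
  using assms
proof (induction xs ys arbitrary: zs rule: shuffles.induct)
  case (1 ys) thus ?case by simp
next
  case (2 xs) thus ?case by simp
next
  case (3 x xs y ys)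
  from "3.prems"(2) consider (l) zs' where "zs = x # zs'" "zs' \<in> shuffles xs (y # ys)"
    | (r) zs' where "zs = y # zs'" "zs' \<in> shuffles (x # xs) ys" by auto
  thus ?case
  proof cases
    case l
    have "(cstep n)\<^sup>*\<^sup>* (xs @ y # ys) zs'" using "3.IH"(1)[OF _ l(2)] "3.prems"(1) by simp
    thus ?thesis using csteps_prefix[of n _ _ "[x]"] l(1) by simp
  next
    case r
    have "(cstep n)\<^sup>*\<^sup>* ((x # xs) @ ys) zs'" using "3.IH"(2)[OF _ r(2)] "3.prems"(1) by simp
    hence a: "(cstep n)\<^sup>*\<^sup>* (y # (x # xs) @ ys) zs" using csteps_prefix[of n _ _ "[y]"] r(1) by simp
    have "(cstep n)\<^sup>*\<^sup>* ((x # xs) @ y # ys) (y # (x # xs) @ ys)"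
      using "3.prems"(1) by (intro move_left) simp
    thus ?thesis using a by simp
  qed
qed

lemma map_in_shuffles: "zs \<in> shuffles xs ys \<Longrightarrow> map f zs \<in> shuffles (map f xs) (map f ys)"
proof (induction xs ys arbitrary: zs rule: shuffles.induct)
  case (3 x xs y ys)
  thus ?case by (auto intro: Cons_in_shuffles_leftI Cons_in_shuffles_rightI)
qed auto

lemma shuffles_filter_iff:
  assumes "\<forall>x\<in>set xs. P x" "\<forall>y\<in>set ys. \<not> P y"
  shows "zs \<in> shuffles xs ys \<longleftrightarrow> filter P zs = xs \<and> filter (\<lambda>x. \<not> P x) zs = ys"
proof
  assume z: "zs \<in> shuffles xs ys"
  have "filter P zs \<in> shuffles (filter P xs) (filter P ys)" using filter_shuffles z by blast
  moreover have "filter P xs = xs" "filter P ys = []" using assms by (auto simp: filter_id_conv)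
  ultimately have 1: "filter P zs = xs" by simp
  have "filter (\<lambda>x. \<not> P x) zs \<in> shuffles (filter (\<lambda>x. \<not> P x) xs) (filter (\<lambda>x. \<not> P x) ys)"
    using filter_shuffles z by blast
  moreover have "filter (\<lambda>x. \<not> P x) xs = []" "filter (\<lambda>x. \<not> P x) ys = ys"
    using assms by (auto simp: filter_id_conv)
  ultimately show "filter P zs = xs \<and> filter (\<lambda>x. \<not> P x) zs = ys" using 1 by simp
next
  assume "filter P zs = xs \<and> filter (\<lambda>x. \<not> P x) zs = ys"
  thus "zs \<in> shuffles xs ys" using partition_in_shuffles[of zs P] by simp
qed



definition T :: "nat \<Rightarrow> nat list \<Rightarrow> bool" where "T n1 c \<longleftrightarrow> nz (take n1 c)"

lemma T_padB: "length c = n1 \<Longrightarrow> nz c \<Longrightarrow> T n1 (padB n2 c)"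
  unfolding T_def padB_def by simp

lemma not_T_padA: "\<not> T n1 (padA n1 c)"
  unfolding T_def padA_def nz_def by simp

lemma map_split2:
  assumes "map f xs = u @ c # d # v"
  obtains a1 c0 d0 a3 where "xs = a1 @ c0 # d0 # a3" "map f a1 = u" "f c0 = c" "f d0 = d" "map f a3 = v"
proof -
  obtain a1 a2 where 1: "xs = a1 @ a2" "map f a1 = u" "map f a2 = c # d # v"
    using assms by (auto simp: map_eq_append_conv)
  obtain c0 a2' where 2: "a2 = c0 # a2'" "f c0 = c" "map f a2' = d # v" using 1(3) by (auto simp: map_eq_Cons_conv)
  obtain d0 a3 where 3: "a2' = d0 # a3" "f d0 = d" "map f a3 = v" using 2(3) by (auto simp: map_eq_Cons_conv)
  show ?thesis using that 1 2 3 by blast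
qed

lemma good_csteps: "good n as \<Longrightarrow> (cstep m)\<^sup>*\<^sup>* as as' \<Longrightarrow> good n as'"
  unfolding good_def using csteps_set by blast

lemma CL_fwd:
  assumes ga: "good n1 as" and gb: "good n2 bs"
    and r: "(cstep (n1 + n2))\<^sup>*\<^sup>* (map (padB n2) as @ map (padA n1) bs) ds"
  shows "\<exists>as' bs'. (cstep n1)\<^sup>*\<^sup>* as as' \<and> (cstep n2)\<^sup>*\<^sup>* bs bs' \<and>
     filter (T n1) ds = map (padB n2) as' \<and> filter (\<lambda>x. \<not> T n1 x) ds = map (padA n1) bs'"
  using r
proof (induction rule: rtranclp_induct)
  case base
  have "filter (T n1) (map (padB n2) as) = map (padB n2) as"
    using ga T_padB unfolding good_def by (auto simp: filter_id_conv)
  moreover have "filter (T n1) (map (padA n1) bs) = []"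
    using not_T_padA by (auto simp: filter_empty_conv)
  moreover have "filter (\<lambda>x. \<not> T n1 x) (map (padB n2) as) = []"
    using ga T_padB unfolding good_def by (auto simp: filter_empty_conv)
  moreover have "filter (\<lambda>x. \<not> T n1 x) (map (padA n1) bs) = map (padA n1) bs"
    using not_T_padA by (auto simp: filter_id_conv)
  ultimately show ?case by auto
next
  case (step ds es)
  obtain as' bs' where IH: "(cstep n1)\<^sup>*\<^sup>* as as'" "(cstep n2)\<^sup>*\<^sup>* bs bs'"
     "filter (T n1) ds = map (padB n2) as'" "filter (\<lambda>x. \<not> T n1 x) ds = map (padA n1) bs'"
    using step.IH by blast
  have ga': "good n1 as'" using good_csteps[OF ga IH(1)] .
  have gb': "good n2 bs'" using good_csteps[OF gb IH(2)] .
  obtain u c d v where e: "ds = u @ c # d # v" "es = u @ d # c # v" "above (n1 + n2) c d"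
    using step.hyps(2) unfolding cstep_def by blast
  consider (TT) "T n1 c" "T n1 d" | (FF) "\<not> T n1 c" "\<not> T n1 d" | (TF) "T n1 c" "\<not> T n1 d"
    | (FT) "\<not> T n1 c" "T n1 d" by blast
  thus ?case
  proof cases
    case TT
    have "map (padB n2) as' = filter (T n1) u @ c # d # filter (T n1) v"
      using IH(3) e(1) TT by simp
    then obtain a1 c0 d0 a3 where m: "as' = a1 @ c0 # d0 # a3" "map (padB n2) a1 = filter (T n1) u"
      "padB n2 c0 = c" "padB n2 d0 = d" "map (padB n2) a3 = filter (T n1) v"
      by (rule map_split2)
    have "nz d0" using ga' m(1) unfolding good_def by auto
    hence "above n1 c0 d0" using e(3) m(3,4) tz_padB[of n2 c0] lz_padB[of d0 n2]
      unfolding above_def by simp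
    hence cs: "cstep n1 as' (a1 @ d0 # c0 # a3)" unfolding cstep_def m(1) by blast
    have "filter (T n1) es = map (padB n2) (a1 @ d0 # c0 # a3)"
      using e(2) TT m by simp
    moreover have "filter (\<lambda>x. \<not> T n1 x) es = map (padA n1) bs'"
      using IH(4) e TT by simp
    ultimately show ?thesis using IH(1,2) cs by (meson rtranclp.rtrancl_into_rtrancl)
  next
    case FF
    have "map (padA n1) bs' = filter (\<lambda>x. \<not> T n1 x) u @ c # d # filter (\<lambda>x. \<not> T n1 x) v"
      using IH(4) e(1) FF by simp
    then obtain a1 c0 d0 a3 where m: "bs' = a1 @ c0 # d0 # a3" "map (padA n1) a1 = filter (\<lambda>x. \<not> T n1 x) u"
      "padA n1 c0 = c" "padA n1 d0 = d" "map (padA n1) a3 = filter (\<lambda>x. \<not> T n1 x) v"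
      by (rule map_split2)
    have "nz c0" using gb' m(1) unfolding good_def by auto
    hence "above n2 c0 d0" using e(3) m(3,4) tz_padA[of c0 n1] lz_padA[of n1 d0]
      unfolding above_def by simp
    hence cs: "cstep n2 bs' (a1 @ d0 # c0 # a3)" unfolding cstep_def m(1) by blast
    have "filter (\<lambda>x. \<not> T n1 x) es = map (padA n1) (a1 @ d0 # c0 # a3)"
      using e(2) FF m by simp
    moreover have "filter (T n1) es = map (padB n2) as'"
      using IH(3) e FF by simp
    ultimately show ?thesis using IH(1,2) cs by (meson rtranclp.rtrancl_into_rtrancl)
  next
    case TF
    have "filter (T n1) es = filter (T n1) ds" "filter (\<lambda>x. \<not> T n1 x) es = filter (\<lambda>x. \<not> T n1 x) ds"
      using e TF by simp_all
    thus ?thesis using IH by auto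
  next
    case FT
    have "c \<in> set (filter (\<lambda>x. \<not> T n1 x) ds)" using e(1) FT by simp
    then obtain c0 where c0: "c0 \<in> set bs'" "c = padA n1 c0" using IH(4) by auto
    have "d \<in> set (filter (T n1) ds)" using e(1) FT by simp
    then obtain d0 where d0: "d0 \<in> set as'" "d = padB n2 d0" using IH(3) by auto
    have g0: "nz c0" "length c0 = n2" using gb' c0(1) unfolding good_def by auto
    have g1: "nz d0" "length d0 = n1" using ga' d0(1) unfolding good_def by auto
    have "tz c = tz c0" using tz_padA[OF g0(1)] c0(2) by simp
    moreover have "lz d = lz d0" using lz_padB[OF g1(1)] d0(2) by simp
    ultimately have False using e(3) lz_tz_less[OF g0(1)] lz_tz_less[OF g1(1)] g0(2) g1(2)
      unfolding above_def by simp
    thus ?thesis ..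
  qed
qed

lemma CL:
  assumes ga: "good n1 as" and gb: "good n2 bs"
  shows "(cstep (n1 + n2))\<^sup>*\<^sup>* (map (padB n2) as @ map (padA n1) bs) ds \<longleftrightarrow>
    (\<exists>as' bs'. (cstep n1)\<^sup>*\<^sup>* as as' \<and> (cstep n2)\<^sup>*\<^sup>* bs bs' \<and>
       ds \<in> shuffles (map (padB n2) as') (map (padA n1) bs'))"
proof
  assume r: "(cstep (n1 + n2))\<^sup>*\<^sup>* (map (padB n2) as @ map (padA n1) bs) ds"
  obtain as' bs' where o: "(cstep n1)\<^sup>*\<^sup>* as as'" "(cstep n2)\<^sup>*\<^sup>* bs bs'"
     "filter (T n1) ds = map (padB n2) as'" "filter (\<lambda>x. \<not> T n1 x) ds = map (padA n1) bs'"
    using CL_fwd[OF ga gb r] by blast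
  have ga': "good n1 as'" using good_csteps[OF ga o(1)] .
  have "ds \<in> shuffles (map (padB n2) as') (map (padA n1) bs')"
    using o(3,4) shuffles_filter_iff[of "map (padB n2) as'" "T n1" "map (padA n1) bs'" ds]
      ga' T_padB not_T_padA unfolding good_def by auto
  thus "\<exists>as' bs'. (cstep n1)\<^sup>*\<^sup>* as as' \<and> (cstep n2)\<^sup>*\<^sup>* bs bs' \<and>
       ds \<in> shuffles (map (padB n2) as') (map (padA n1) bs')" using o(1,2) by blast
next
  assume "\<exists>as' bs'. (cstep n1)\<^sup>*\<^sup>* as as' \<and> (cstep n2)\<^sup>*\<^sup>* bs bs' \<and>
       ds \<in> shuffles (map (padB n2) as') (map (padA n1) bs')"
  then obtain as' bs' where o: "(cstep n1)\<^sup>*\<^sup>* as as'" "(cstep n2)\<^sup>*\<^sup>* bs bs'"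
    "ds \<in> shuffles (map (padB n2) as') (map (padA n1) bs')" by blast
  have 1: "(cstep (n1 + n2))\<^sup>*\<^sup>* (map (padB n2) as @ map (padA n1) bs) (map (padB n2) as' @ map (padA n1) bs)"
    by (rule csteps_suffix[OF csteps_padB[OF o(1)]])
  have 2: "(cstep (n1 + n2))\<^sup>*\<^sup>* (map (padB n2) as' @ map (padA n1) bs) (map (padB n2) as' @ map (padA n1) bs')"
    by (rule csteps_prefix[OF csteps_padA[OF o(2)]])
  have ab: "above (n1 + n2) (padB n2 x) (padA n1 y)" for x y
    using tz_padB[of n2 x] lz_padA[of n1 y] unfolding above_def by simp
  have 3: "(cstep (n1 + n2))\<^sup>*\<^sup>* (map (padB n2) as' @ map (padA n1) bs') ds"
    using o(3) ab by (intro shuffle_reach) auto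
  show "(cstep (n1 + n2))\<^sup>*\<^sup>* (map (padB n2) as @ map (padA n1) bs) ds"
    using 1 2 3 by (meson rtranclp_trans)
qed

lemma padB_inj: "padB m x = padB m y \<Longrightarrow> x = y" unfolding padB_def by simp
lemma padA_inj: "padA m x = padA m y \<Longrightarrow> x = y" unfolding padA_def by simp

lemma shuffle_unique:
  assumes ga: "good n1 as" "good n1 as'"
    and z: "ds \<in> shuffles (map (padB n2) as) (map (padA n1) bs)"
       "ds \<in> shuffles (map (padB n2) as') (map (padA n1) bs')"
  shows "as = as' \<and> bs = bs'"
proof -
  have A: "filter (T n1) ds = map (padB n2) xs \<and> filter (\<lambda>x. \<not> T n1 x) ds = map (padA n1) ys"
    if "good n1 xs" "ds \<in> shuffles (map (padB n2) xs) (map (padA n1) ys)" for xs ys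
    using shuffles_filter_iff[of "map (padB n2) xs" "T n1" "map (padA n1) ys" ds] that
      T_padB not_T_padA unfolding good_def by auto
  have "map (padB n2) as = map (padB n2) as'" "map (padA n1) bs = map (padA n1) bs'"
    using A[OF ga(1) z(1)] A[OF ga(2) z(2)] by auto
  thus ?thesis using padB_inj padA_inj by (metis inj_onI inj_map_eq_map)
qed



lemma map_const_rep: "map (\<lambda>r. x) xs = replicate (length xs) x"
  by (induction xs) auto

lemma length_ov: "length (ov A B) = length A + length B" by (simp add: ov_def)

lemma map_zero: "(\<forall>r\<in>set xs. f r = (0::nat)) \<Longrightarrow> map f xs = replicate (length xs) 0"
  by (induction xs) auto


lemma length_un: "length (un A B) = length A + length B" by (simp add: un_def)

lemma sqm_ov: "sqm n1 A \<Longrightarrow> sqm n2 B \<Longrightarrow> sqm (n1 + n2) (ov A B)"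
  by (auto simp: sqm_def ov_def)

lemma sqm_un: "sqm n1 A \<Longrightarrow> sqm n2 B \<Longrightarrow> sqm (n1 + n2) (un A B)"
  by (auto simp: sqm_def un_def)

lemma packed_ov: assumes "packed k A" "packed k B" shows "packed k (ov A B)"
proof -
  have sA: "sqm (length A) A" and sB: "sqm (length B) B" using assms packed_sqm by auto
  have rows: "\<forall>r\<in>set (ov A B). length r = length (ov A B) \<and> (\<forall>x\<in>set r. x \<le> k) \<and> (\<exists>x\<in>set r. x \<noteq> 0)"
  proof
    fix r assume "r \<in> set (ov A B)"
    then consider (a) r0 where "r0 \<in> set A" "r = r0 @ replicate (length B) 0"
      | (b) r0 where "r0 \<in> set B" "r = replicate (length A) 0 @ r0" unfolding ov_def by auto
    thus "length r = length (ov A B) \<and> (\<forall>x\<in>set r. x \<le> k) \<and> (\<exists>x\<in>set r. x \<noteq> 0)"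
    proof cases
      case a
      have "length r0 = length A" "\<forall>x\<in>set r0. x \<le> k" "\<exists>x\<in>set r0. x \<noteq> 0"
        using assms(1) a(1) unfolding packed_def by auto
      thus ?thesis using a(2) by (auto simp: length_ov)
    next
      case b
      have "length r0 = length B" "\<forall>x\<in>set r0. x \<le> k" "\<exists>x\<in>set r0. x \<noteq> 0"
        using assms(2) b(1) unfolding packed_def by auto
      thus ?thesis using b(2) by (auto simp: length_ov)
    qed
  qed
  have cols: "\<exists>r\<in>set (ov A B). r ! j \<noteq> 0" if j: "j < length (ov A B)" for j
  proof (cases "j < length A")
    case True
    then obtain r where r: "r \<in> set A" "r ! j \<noteq> 0" using assms(1) unfolding packed_def by blast
    have "length r = length A" using sA r(1) by (simp add: sqm_def)
    hence "(r @ replicate (length B) 0) ! j \<noteq> 0" using r True by (simp add: nth_append)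
    thus ?thesis using r(1) unfolding ov_def by auto
  next
    case False
    hence j2: "j - length A < length B" using j by (simp add: length_ov)
    then obtain r where r: "r \<in> set B" "r ! (j - length A) \<noteq> 0" using assms(2) unfolding packed_def by blast
    hence "(replicate (length A) 0 @ r) ! j \<noteq> 0" using False by (simp add: nth_append)
    thus ?thesis using r(1) unfolding ov_def by auto
  qed
  show ?thesis unfolding packed_def using rows cols by blast
qed

lemma rev_ov: "rev (ov A B) = un (rev B) (rev A)"
  by (simp add: ov_def un_def rev_map)

lemma un_rev_ov: "un A B = rev (ov (rev B) (rev A))"
  by (simp add: rev_ov)

lemma packed_rev: "packed k (rev M) \<longleftrightarrow> packed k M"
  by (simp add: packed_def)

lemma packed_un: "packed k A \<Longrightarrow> packed k B \<Longrightarrow> packed k (un A B)"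
  unfolding un_rev_ov packed_rev by (intro packed_ov) (simp_all add: packed_rev)

lemma transpose_ov:
  assumes sA: "sqm n1 A" and sB: "sqm n2 B"
  shows "transpose (ov A B) = map (padB n2) (transpose A) @ map (padA n1) (transpose B)"
proof (rule nth_equalityI)
  have s: "sqm (n1 + n2) (ov A B)" using sqm_ov[OF sA sB] .
  show "length (transpose (ov A B)) = length (map (padB n2) (transpose A) @ map (padA n1) (transpose B))"
    using length_transpose_sqm[OF s] length_transpose_sqm[OF sA] length_transpose_sqm[OF sB] by simp
  fix j assume "j < length (transpose (ov A B))"
  hence j: "j < n1 + n2" using length_transpose_sqm[OF s] by simp
  have L: "transpose (ov A B) ! j = col (ov A B) j" using transpose_sqm_nth[OF s j] .
  have lA: "length A = n1" "\<forall>r\<in>set A. length r = n1" "length B = n2" using sA sB by (auto simp: sqm_def)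
  show "transpose (ov A B) ! j = (map (padB n2) (transpose A) @ map (padA n1) (transpose B)) ! j"
  proof (cases "j < n1")
    case True
    have "col (ov A B) j = col A j @ replicate n2 0"
      unfolding col_def ov_def using True lA by (auto simp: nth_append map_const_rep comp_def)
    moreover have "(map (padB n2) (transpose A) @ map (padA n1) (transpose B)) ! j = padB n2 (col A j)"
      using True length_transpose_sqm[OF sA] transpose_sqm_nth[OF sA True] by (simp add: nth_append)
    ultimately show ?thesis using L by (simp add: padB_def)
  next
    case False
    have j2: "j - n1 < n2" using j False by simp
    have "col (ov A B) j = replicate n1 0 @ col B (j - n1)"
      unfolding col_def ov_def using False lA j by (auto simp: nth_append map_const_rep comp_def intro!: map_zero)
    moreover have "(map (padB n2) (transpose A) @ map (padA n1) (transpose B)) ! j = padA n1 (col B (j - n1))"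
      using False length_transpose_sqm[OF sA] length_transpose_sqm[OF sB] transpose_sqm_nth[OF sB j2] j2 by (simp add: nth_append)
    ultimately show ?thesis using L by (simp add: padA_def)
  qed
qed

lemma transpose_un:
  assumes sA: "sqm n1 A" and sB: "sqm n2 B"
  shows "transpose (un A B) = map (padA n1) (transpose B) @ map (padB n2) (transpose A)"
proof (rule nth_equalityI)
  have s: "sqm (n1 + n2) (un A B)" using sqm_un[OF sA sB] .
  show "length (transpose (un A B)) = length (map (padA n1) (transpose B) @ map (padB n2) (transpose A))"
    using length_transpose_sqm[OF s] length_transpose_sqm[OF sA] length_transpose_sqm[OF sB] by simp
  fix j assume "j < length (transpose (un A B))"
  hence j: "j < n1 + n2" using length_transpose_sqm[OF s] by simp
  have L: "transpose (un A B) ! j = col (un A B) j" using transpose_sqm_nth[OF s j] .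
  have lA: "length A = n1" "length B = n2" "\<forall>r\<in>set B. length r = n2" using sA sB by (auto simp: sqm_def)
  show "transpose (un A B) ! j = (map (padA n1) (transpose B) @ map (padB n2) (transpose A)) ! j"
  proof (cases "j < n2")
    case True
    have "col (un A B) j = replicate n1 0 @ col B j"
      unfolding col_def un_def using True lA by (auto simp: nth_append map_const_rep comp_def)
    moreover have "(map (padA n1) (transpose B) @ map (padB n2) (transpose A)) ! j = padA n1 (col B j)"
      using True length_transpose_sqm[OF sB] transpose_sqm_nth[OF sB True] by (simp add: nth_append)
    ultimately show ?thesis using L by (simp add: padA_def)
  next
    case False
    have j2: "j - n2 < n1" using j False by simp
    have "col (un A B) j = col A (j - n2) @ replicate n2 0"
      unfolding col_def un_def using False lA j by (auto simp: nth_append map_const_rep comp_def intro!: map_zero)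
    moreover have "(map (padA n1) (transpose B) @ map (padB n2) (transpose A)) ! j = padB n2 (col A (j - n2))"
      using False length_transpose_sqm[OF sB] length_transpose_sqm[OF sA] transpose_sqm_nth[OF sA j2] j2 by (simp add: nth_append)
    ultimately show ?thesis using L by (simp add: padB_def)
  qed
qed

lemma cols_transpose: "sqm n (M::nat list list) \<Longrightarrow> cols M = transpose M"
proof -
  assume s: "sqm n M"
  show ?thesis
  proof (rule nth_equalityI)
    show "length (cols M) = length (transpose M)"
      using s length_transpose_sqm[OF s] by (simp add: cols_def sqm_def)
    fix j assume "j < length (cols M)"
    hence "j < n" using s by (simp add: cols_def sqm_def)
    thus "cols M ! j = transpose M ! j" using transpose_sqm_nth[OF s] s by (simp add: cols_def sqm_def)
  qed
qed

lemma Sh_c_eq: "packed k M1 \<Longrightarrow> packed k M2 \<Longrightarrow>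
  Sh_c M1 M2 = transpose ` shuffles (map (padB (length M2)) (transpose M1)) (map (padA (length M1)) (transpose M2))"
proof -
  assume "packed k M1" "packed k M2"
  moreover have "padA m = (@) (replicate m 0)" "padB m = (\<lambda>c. c @ replicate m 0)" for m
    by (auto simp: fun_eq_iff padA_def padB_def)
  ultimately show ?thesis unfolding Sh_c_def using cols_transpose[OF packed_sqm] by simp
qed

lemma good_transpose: "packed k M \<Longrightarrow> good (length M) (transpose M)"
proof -
  assume p: "packed k M"
  have p2: "packed k (transpose M)" using packed_transpose[OF p] .
  have "length (transpose M) = length M" using length_transpose_sqm[OF packed_sqm[OF p]] .
  thus ?thesis using p2 unfolding packed_def good_def nz_def by auto
qed

lemma Sh_uniq:
  assumes p: "packed k M1" "packed k M2" "packed k M1'" "packed k M2'"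
    and l: "length M1' = length M1" "length M2' = length M2"
    and m: "M \<in> Sh_c M1 M2" "M \<in> Sh_c M1' M2'"
  shows "M1 = M1' \<and> M2 = M2'"
proof -
  define n1 n2 where "n1 = length M1" and "n2 = length M2"
  obtain C where C: "C \<in> shuffles (map (padB n2) (transpose M1)) (map (padA n1) (transpose M2))" "M = transpose C"
    using m(1) Sh_c_eq[OF p(1,2)] n1_def n2_def by auto
  obtain C' where C': "C' \<in> shuffles (map (padB n2) (transpose M1')) (map (padA n1) (transpose M2'))" "M = transpose C'"
    using m(2) Sh_c_eq[OF p(3,4)] n1_def n2_def l by auto
  have g: "good n1 (transpose M1)" "good n2 (transpose M2)" "good n1 (transpose M1')" "good n2 (transpose M2')"
    using good_transpose[OF p(1)] good_transpose[OF p(2)] good_transpose[OF p(3)] good_transpose[OF p(4)]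
      l n1_def n2_def by simp_all
  have sqC: "sqm (n1 + n2) C" if "C \<in> shuffles (map (padB n2) X) (map (padA n1) Y)" "good n1 X" "good n2 Y"
    "length X = n1" "length Y = n2" for C X Y
    using that length_shuffles[OF that(1)] set_shuffles[OF that(1)]
    unfolding sqm_def good_def padA_def padB_def by auto
  have lt: "length (transpose M1) = n1" "length (transpose M2) = n2" "length (transpose M1') = n1" "length (transpose M2') = n2"
    using length_transpose_sqm[OF packed_sqm[OF p(1)]] length_transpose_sqm[OF packed_sqm[OF p(2)]]
      length_transpose_sqm[OF packed_sqm[OF p(3)]] length_transpose_sqm[OF packed_sqm[OF p(4)]]
      l n1_def n2_def by simp_all
  have "C = C'" using transpose_transpose_sqm[OF sqC[OF C(1) g(1,2) lt(1,2)]]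
      transpose_transpose_sqm[OF sqC[OF C'(1) g(3,4) lt(3,4)]] C(2) C'(2) by simp
  hence "transpose M1 = transpose M1' \<and> transpose M2 = transpose M2'"
    using shuffle_unique[OF g(1) g(3) C(1)] C'(1) by simp
  thus ?thesis using transpose_transpose_sqm[OF packed_sqm[OF p(1)]] transpose_transpose_sqm[OF packed_sqm[OF p(2)]]
     transpose_transpose_sqm[OF packed_sqm[OF p(3)]] transpose_transpose_sqm[OF packed_sqm[OF p(4)]] by metis
qed



lemma packed_Nil: "packed k []" by (simp add: packed_def)

lemma good_rev: "good n xs \<Longrightarrow> good n (map rev xs)"
  unfolding good_def nz_def by auto

lemma map_rev_rev: "map rev (map rev xs) = xs" by (simp add: comp_def)

lemma rev_padA: "map rev (map (padA m) xs) = map (padB m) (map rev xs)"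
  by (simp add: padA_def padB_def)

lemma rev_padB: "map rev (map (padB m) xs) = map (padA m) (map rev xs)"
  by (simp add: padA_def padB_def)

lemma shuffles_rev: "map rev zs \<in> shuffles (map rev xs) (map rev ys) \<longleftrightarrow> zs \<in> shuffles xs ys"
  using map_in_shuffles[of zs xs ys rev] map_in_shuffles[of "map rev zs" "map rev xs" "map rev ys" rev]
  by (auto simp: map_rev_rev)

lemma DL:
  assumes ga: "good n1 as" and gb: "good n2 bs"
  shows "(cstep (n1 + n2))\<^sup>*\<^sup>* ds (map (padA n1) bs @ map (padB n2) as) \<longleftrightarrow>
    (\<exists>as' bs'. (cstep n1)\<^sup>*\<^sup>* as' as \<and> (cstep n2)\<^sup>*\<^sup>* bs' bs \<and>
       ds \<in> shuffles (map (padB n2) as') (map (padA n1) bs'))"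
proof -
  have "(cstep (n1 + n2))\<^sup>*\<^sup>* ds (map (padA n1) bs @ map (padB n2) as) \<longleftrightarrow>
     (cstep (n2 + n1))\<^sup>*\<^sup>* (map (padB n1) (map rev bs) @ map (padA n2) (map rev as)) (map rev ds)"
  proof -
    have eq: "map rev (map (padA n1) bs @ map (padB n2) as) = map (padB n1) (map rev bs) @ map (padA n2) (map rev as)"
      by (simp only: map_append rev_padA rev_padB)
    show ?thesis
      using csteps_rev[of "n1 + n2" ds "map (padA n1) bs @ map (padB n2) as"] unfolding eq add.commute[of n1 n2] .
  qed
  also have "\<dots> \<longleftrightarrow> (\<exists>bs'' as''. (cstep n2)\<^sup>*\<^sup>* (map rev bs) bs'' \<and> (cstep n1)\<^sup>*\<^sup>* (map rev as) as'' \<and>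
       map rev ds \<in> shuffles (map (padB n1) bs'') (map (padA n2) as''))"
    by (rule CL[OF good_rev[OF gb] good_rev[OF ga]])
  also have "\<dots> \<longleftrightarrow> (\<exists>as' bs'. (cstep n1)\<^sup>*\<^sup>* as' as \<and> (cstep n2)\<^sup>*\<^sup>* bs' bs \<and>
       ds \<in> shuffles (map (padB n2) as') (map (padA n1) bs'))"
  proof
    assume "\<exists>bs'' as''. (cstep n2)\<^sup>*\<^sup>* (map rev bs) bs'' \<and> (cstep n1)\<^sup>*\<^sup>* (map rev as) as'' \<and>
       map rev ds \<in> shuffles (map (padB n1) bs'') (map (padA n2) as'')"
    then obtain bs'' as'' where o: "(cstep n2)\<^sup>*\<^sup>* (map rev bs) bs''" "(cstep n1)\<^sup>*\<^sup>* (map rev as) as''"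
       "map rev ds \<in> shuffles (map (padB n1) bs'') (map (padA n2) as'')" by blast
    have 1: "(cstep n1)\<^sup>*\<^sup>* (map rev as'') as" using o(2) unfolding csteps_rev[of n1 "map rev as"] map_rev_rev .
    have 2: "(cstep n2)\<^sup>*\<^sup>* (map rev bs'') bs" using o(1) unfolding csteps_rev[of n2 "map rev bs"] map_rev_rev .
    have "map rev ds \<in> shuffles (map rev (map (padB n2) (map rev as''))) (map rev (map (padA n1) (map rev bs'')))"
      using o(3) unfolding rev_padA rev_padB map_rev_rev by (subst shuffles_commutes)
    hence 3: "ds \<in> shuffles (map (padB n2) (map rev as'')) (map (padA n1) (map rev bs''))"
      unfolding shuffles_rev .
    show "\<exists>as' bs'. (cstep n1)\<^sup>*\<^sup>* as' as \<and> (cstep n2)\<^sup>*\<^sup>* bs' bs \<and>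
       ds \<in> shuffles (map (padB n2) as') (map (padA n1) bs')" using 1 2 3 by blast
  next
    assume "\<exists>as' bs'. (cstep n1)\<^sup>*\<^sup>* as' as \<and> (cstep n2)\<^sup>*\<^sup>* bs' bs \<and>
       ds \<in> shuffles (map (padB n2) as') (map (padA n1) bs')"
    then obtain as' bs' where o: "(cstep n1)\<^sup>*\<^sup>* as' as" "(cstep n2)\<^sup>*\<^sup>* bs' bs"
       "ds \<in> shuffles (map (padB n2) as') (map (padA n1) bs')" by blast
    have 1: "(cstep n1)\<^sup>*\<^sup>* (map rev as) (map rev as')" using o(1) csteps_rev by blast
    have 2: "(cstep n2)\<^sup>*\<^sup>* (map rev bs) (map rev bs')" using o(2) csteps_rev by blast
    have "map rev ds \<in> shuffles (map rev (map (padB n2) as')) (map rev (map (padA n1) bs'))"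
      using o(3) shuffles_rev by blast
    hence 3: "map rev ds \<in> shuffles (map (padB n1) (map rev bs')) (map (padA n2) (map rev as'))"
      unfolding rev_padA rev_padB by (subst shuffles_commutes)
    show "\<exists>bs'' as''. (cstep n2)\<^sup>*\<^sup>* (map rev bs) bs'' \<and> (cstep n1)\<^sup>*\<^sup>* (map rev as) as'' \<and>
       map rev ds \<in> shuffles (map (padB n1) bs'') (map (padA n2) as'')" using 1 2 3 by blast
  qed
  finally show ?thesis .
qed

lemma keyE:
  assumes pA: "packed k A" and pB: "packed k B"
  shows "le_M k (ov A B) M \<longleftrightarrow> (\<exists>M1 M2. le_M k A M1 \<and> le_M k B M2 \<and> M \<in> Sh_c M1 M2)"
proof -
  define n1 n2 where "n1 = length A" and "n2 = length B"
  have pO: "packed k (ov A B)" using packed_ov[OF pA pB] .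
  have tO: "transpose (ov A B) = map (padB n2) (transpose A) @ map (padA n1) (transpose B)"
    using transpose_ov[OF packed_sqm[OF pA] packed_sqm[OF pB]] n1_def n2_def by simp
  have gA: "good n1 (transpose A)" using good_transpose[OF pA] n1_def by simp
  have gB: "good n2 (transpose B)" using good_transpose[OF pB] n2_def by simp
  have "le_M k (ov A B) M \<longleftrightarrow> (\<exists>C. (cstep (n1 + n2))\<^sup>*\<^sup>* (transpose (ov A B)) C \<and> M = transpose C)"
    using le_M_up[OF pO] by (simp add: length_ov n1_def n2_def)
  also have "\<dots> \<longleftrightarrow> (\<exists>C as' bs'. (cstep n1)\<^sup>*\<^sup>* (transpose A) as' \<and> (cstep n2)\<^sup>*\<^sup>* (transpose B) bs' \<and>
       C \<in> shuffles (map (padB n2) as') (map (padA n1) bs') \<and> M = transpose C)"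
    unfolding tO CL[OF gA gB] by blast
  also have "\<dots> \<longleftrightarrow> (\<exists>M1 M2. le_M k A M1 \<and> le_M k B M2 \<and> M \<in> Sh_c M1 M2)"
  proof
    assume "\<exists>C as' bs'. (cstep n1)\<^sup>*\<^sup>* (transpose A) as' \<and> (cstep n2)\<^sup>*\<^sup>* (transpose B) bs' \<and>
       C \<in> shuffles (map (padB n2) as') (map (padA n1) bs') \<and> M = transpose C"
    then obtain C as' bs' where o: "(cstep n1)\<^sup>*\<^sup>* (transpose A) as'" "(cstep n2)\<^sup>*\<^sup>* (transpose B) bs'"
       "C \<in> shuffles (map (padB n2) as') (map (padA n1) bs')" "M = transpose C" by blast
    have pa: "packed k as'" using packed_csteps[OF packed_transpose[OF pA] o(1)] .
    have pb: "packed k bs'" using packed_csteps[OF packed_transpose[OF pB] o(2)] .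
    have l1: "le_M k A (transpose as')" using le_M_up[OF pA] o(1) n1_def by blast
    have l2: "le_M k B (transpose bs')" using le_M_up[OF pB] o(2) n2_def by blast
    have la: "length (transpose as') = n1"
      using length_transpose_sqm[OF packed_sqm[OF pa]] csteps_length[OF o(1)]
        length_transpose_sqm[OF packed_sqm[OF pA]] n1_def by simp
    have lb: "length (transpose bs') = n2"
      using length_transpose_sqm[OF packed_sqm[OF pb]] csteps_length[OF o(2)]
        length_transpose_sqm[OF packed_sqm[OF pB]] n2_def by simp
    have "M \<in> Sh_c (transpose as') (transpose bs')"
      unfolding Sh_c_eq[OF packed_transpose[OF pa] packed_transpose[OF pb]] la lb
        transpose_transpose_sqm[OF packed_sqm[OF pa]] transpose_transpose_sqm[OF packed_sqm[OF pb]]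
      using o(3,4) by blast
    thus "\<exists>M1 M2. le_M k A M1 \<and> le_M k B M2 \<and> M \<in> Sh_c M1 M2" using l1 l2 by blast
  next
    assume "\<exists>M1 M2. le_M k A M1 \<and> le_M k B M2 \<and> M \<in> Sh_c M1 M2"
    then obtain M1 M2 where o: "le_M k A M1" "le_M k B M2" "M \<in> Sh_c M1 M2" by blast
    obtain as' where a: "(cstep n1)\<^sup>*\<^sup>* (transpose A) as'" "M1 = transpose as'" using o(1) le_M_up[OF pA] n1_def by blast
    obtain bs' where b: "(cstep n2)\<^sup>*\<^sup>* (transpose B) bs'" "M2 = transpose bs'" using o(2) le_M_up[OF pB] n2_def by blast
    have pa: "packed k as'" using packed_csteps[OF packed_transpose[OF pA] a(1)] .
    have pb: "packed k bs'" using packed_csteps[OF packed_transpose[OF pB] b(1)] .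
    have la: "length (transpose as') = n1"
      using length_transpose_sqm[OF packed_sqm[OF pa]] csteps_length[OF a(1)]
        length_transpose_sqm[OF packed_sqm[OF pA]] n1_def by simp
    have lb: "length (transpose bs') = n2"
      using length_transpose_sqm[OF packed_sqm[OF pb]] csteps_length[OF b(1)]
        length_transpose_sqm[OF packed_sqm[OF pB]] n2_def by simp
    have "M \<in> transpose ` shuffles (map (padB n2) as') (map (padA n1) bs')"
      using o(3) unfolding a(2) b(2) Sh_c_eq[OF packed_transpose[OF pa] packed_transpose[OF pb]] la lb
        transpose_transpose_sqm[OF packed_sqm[OF pa]] transpose_transpose_sqm[OF packed_sqm[OF pb]] .
    thus "\<exists>C as' bs'. (cstep n1)\<^sup>*\<^sup>* (transpose A) as' \<and> (cstep n2)\<^sup>*\<^sup>* (transpose B) bs' \<and>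
       C \<in> shuffles (map (padB n2) as') (map (padA n1) bs') \<and> M = transpose C" using a(1) b(1) by blast
  qed
  finally show ?thesis .
qed

lemma keyH:
  assumes pA: "packed k A" and pB: "packed k B"
  shows "le_M k M (un A B) \<longleftrightarrow> (\<exists>M1 M2. le_M k M1 A \<and> le_M k M2 B \<and> M \<in> Sh_c M1 M2)"
proof -
  define n1 n2 where "n1 = length A" and "n2 = length B"
  have pO: "packed k (un A B)" using packed_un[OF pA pB] .
  have tO: "transpose (un A B) = map (padA n1) (transpose B) @ map (padB n2) (transpose A)"
    using transpose_un[OF packed_sqm[OF pA] packed_sqm[OF pB]] n1_def n2_def by simp
  have gA: "good n1 (transpose A)" using good_transpose[OF pA] n1_def by simp
  have gB: "good n2 (transpose B)" using good_transpose[OF pB] n2_def by simp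
  have "le_M k M (un A B) \<longleftrightarrow> (\<exists>C. (cstep (n1 + n2))\<^sup>*\<^sup>* C (transpose (un A B)) \<and> M = transpose C)"
    using le_M_down[OF pO] by (simp add: length_un n1_def n2_def)
  also have "\<dots> \<longleftrightarrow> (\<exists>C as' bs'. (cstep n1)\<^sup>*\<^sup>* as' (transpose A) \<and> (cstep n2)\<^sup>*\<^sup>* bs' (transpose B) \<and>
       C \<in> shuffles (map (padB n2) as') (map (padA n1) bs') \<and> M = transpose C)"
    unfolding tO DL[OF gA gB] by blast
  also have "\<dots> \<longleftrightarrow> (\<exists>M1 M2. le_M k M1 A \<and> le_M k M2 B \<and> M \<in> Sh_c M1 M2)"
  proof
    assume "\<exists>C as' bs'. (cstep n1)\<^sup>*\<^sup>* as' (transpose A) \<and> (cstep n2)\<^sup>*\<^sup>* bs' (transpose B) \<and>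
       C \<in> shuffles (map (padB n2) as') (map (padA n1) bs') \<and> M = transpose C"
    then obtain C as' bs' where o: "(cstep n1)\<^sup>*\<^sup>* as' (transpose A)" "(cstep n2)\<^sup>*\<^sup>* bs' (transpose B)"
       "C \<in> shuffles (map (padB n2) as') (map (padA n1) bs')" "M = transpose C" by blast
    have pa: "packed k as'" using packed_csteps_back[OF packed_transpose[OF pA] o(1)] .
    have pb: "packed k bs'" using packed_csteps_back[OF packed_transpose[OF pB] o(2)] .
    have l1: "le_M k (transpose as') A" using le_M_down[OF pA] o(1) n1_def by blast
    have l2: "le_M k (transpose bs') B" using le_M_down[OF pB] o(2) n2_def by blast
    have la: "length (transpose as') = n1"
      using length_transpose_sqm[OF packed_sqm[OF pa]] csteps_length[OF o(1)]
        length_transpose_sqm[OF packed_sqm[OF pA]] n1_def by simp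
    have lb: "length (transpose bs') = n2"
      using length_transpose_sqm[OF packed_sqm[OF pb]] csteps_length[OF o(2)]
        length_transpose_sqm[OF packed_sqm[OF pB]] n2_def by simp
    have "M \<in> Sh_c (transpose as') (transpose bs')"
      unfolding Sh_c_eq[OF packed_transpose[OF pa] packed_transpose[OF pb]] la lb
        transpose_transpose_sqm[OF packed_sqm[OF pa]] transpose_transpose_sqm[OF packed_sqm[OF pb]]
      using o(3,4) by blast
    thus "\<exists>M1 M2. le_M k M1 A \<and> le_M k M2 B \<and> M \<in> Sh_c M1 M2" using l1 l2 by blast
  next
    assume "\<exists>M1 M2. le_M k M1 A \<and> le_M k M2 B \<and> M \<in> Sh_c M1 M2"
    then obtain M1 M2 where o: "le_M k M1 A" "le_M k M2 B" "M \<in> Sh_c M1 M2" by blast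
    obtain as' where a: "(cstep n1)\<^sup>*\<^sup>* as' (transpose A)" "M1 = transpose as'" using o(1) le_M_down[OF pA] n1_def by blast
    obtain bs' where b: "(cstep n2)\<^sup>*\<^sup>* bs' (transpose B)" "M2 = transpose bs'" using o(2) le_M_down[OF pB] n2_def by blast
    have pa: "packed k as'" using packed_csteps_back[OF packed_transpose[OF pA] a(1)] .
    have pb: "packed k bs'" using packed_csteps_back[OF packed_transpose[OF pB] b(1)] .
    have la: "length (transpose as') = n1"
      using length_transpose_sqm[OF packed_sqm[OF pa]] csteps_length[OF a(1)]
        length_transpose_sqm[OF packed_sqm[OF pA]] n1_def by simp
    have lb: "length (transpose bs') = n2"
      using length_transpose_sqm[OF packed_sqm[OF pb]] csteps_length[OF b(1)]
        length_transpose_sqm[OF packed_sqm[OF pB]] n2_def by simp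
    have "M \<in> transpose ` shuffles (map (padB n2) as') (map (padA n1) bs')"
      using o(3) unfolding a(2) b(2) Sh_c_eq[OF packed_transpose[OF pa] packed_transpose[OF pb]] la lb
        transpose_transpose_sqm[OF packed_sqm[OF pa]] transpose_transpose_sqm[OF packed_sqm[OF pb]] .
    thus "\<exists>C as' bs'. (cstep n1)\<^sup>*\<^sup>* as' (transpose A) \<and> (cstep n2)\<^sup>*\<^sup>* bs' (transpose B) \<and>
       C \<in> shuffles (map (padB n2) as') (map (padA n1) bs') \<and> M = transpose C" using a(1) b(1) by blast
  qed
  finally show ?thesis .
qed



lemma le_M_length: "le_M k A B \<Longrightarrow> length B = length A"
  unfolding le_M_def by (induction rule: rtranclp_induct) (auto simp: mstep_def swap_cols_def)

lemma fin_up: assumes p: "packed k A" shows "finite {B. le_M k A B}"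
proof -
  have "{B. le_M k A B} \<subseteq> transpose ` {C. set C \<subseteq> set (transpose A) \<and> length C = length (transpose A)}"
  proof
    fix B assume "B \<in> {B. le_M k A B}"
    then obtain C where C: "(cstep (length A))\<^sup>*\<^sup>* (transpose A) C" "B = transpose C" using le_M_up[OF p] by blast
    thus "B \<in> transpose ` {C. set C \<subseteq> set (transpose A) \<and> length C = length (transpose A)}"
      using csteps_set[OF C(1)] csteps_length[OF C(1)] by auto
  qed
  moreover have "finite {C. set C \<subseteq> set (transpose A) \<and> length C = length (transpose A)}"
    by (rule finite_lists_length_eq) simp
  ultimately show ?thesis using finite_surj by blast
qed

lemma fin_down: assumes p: "packed k A" shows "finite {B. le_M k B A}"
proof -
  have "{B. le_M k B A} \<subseteq> transpose ` {C. set C \<subseteq> set (transpose A) \<and> length C = length (transpose A)}"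
  proof
    fix B assume "B \<in> {B. le_M k B A}"
    then obtain C where C: "(cstep (length A))\<^sup>*\<^sup>* C (transpose A)" "B = transpose C" using le_M_down[OF p] by blast
    thus "B \<in> transpose ` {C. set C \<subseteq> set (transpose A) \<and> length C = length (transpose A)}"
      using csteps_set[OF C(1)] csteps_length[OF C(1)] by auto
  qed
  moreover have "finite {C. set C \<subseteq> set (transpose A) \<and> length C = length (transpose A)}"
    by (rule finite_lists_length_eq) simp
  ultimately show ?thesis using finite_surj by blast
qed

lemma cstep_lex: "good n xs \<Longrightarrow> cstep n xs ys \<Longrightarrow> ord_class.lexordp (map lz xs) (map lz ys)"
proof -
  assume g: "good n xs" and "cstep n xs ys"
  then obtain u c d v where e: "xs = u @ c # d # v" "ys = u @ d # c # v" "above n c d"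
    unfolding cstep_def by blast
  have "nz c" "length c = n" using g e(1) unfolding good_def by auto
  hence "lz c < lz d" using lz_tz_less[of c] e(3) unfolding above_def by simp
  thus ?thesis unfolding e by (simp add: lexordp_append_left_rightI)
qed

lemma csteps_lex: "good n xs \<Longrightarrow> (cstep n)\<^sup>+\<^sup>+ xs ys \<Longrightarrow> ord_class.lexordp (map lz xs) (map lz ys)"
proof -
  assume g: "good n xs" and t: "(cstep n)\<^sup>+\<^sup>+ xs ys"
  from t show ?thesis
  proof (induction rule: tranclp_induct)
    case (base y) thus ?case using cstep_lex[OF g] by blast
  next
    case (step y z)
    have "good n y" using good_csteps[OF g tranclp_into_rtranclp[OF step.hyps(1)]] .
    hence "ord_class.lexordp (map lz y) (map lz z)" using cstep_lex step.hyps(2) by blast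
    thus ?case using step.IH lexordp_trans by blast
  qed
qed

lemma csteps_antisym: "good n xs \<Longrightarrow> (cstep n)\<^sup>*\<^sup>* xs ys \<Longrightarrow> (cstep n)\<^sup>*\<^sup>* ys xs \<Longrightarrow> xs = ys"
proof (rule ccontr)
  assume g: "good n xs" and a: "(cstep n)\<^sup>*\<^sup>* xs ys" "(cstep n)\<^sup>*\<^sup>* ys xs" and ne: "xs \<noteq> ys"
  have "(cstep n)\<^sup>+\<^sup>+ xs ys" using rtranclpD[OF a(1)] ne by blast
  moreover have "(cstep n)\<^sup>*\<^sup>* ys xs" using a(2) .
  ultimately have "(cstep n)\<^sup>+\<^sup>+ xs xs" by (meson tranclp_rtranclp_tranclp)
  hence "ord_class.lexordp (map lz xs) (map lz xs)" using csteps_lex[OF g] by blast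
  thus False using lexordp_irreflexive' by blast
qed

lemma le_M_antisym:
  assumes p: "packed k A" and ab: "le_M k A B" and ba: "le_M k B A"
  shows "A = B"
proof -
  obtain C where C: "(cstep (length A))\<^sup>*\<^sup>* (transpose A) C" "B = transpose C" using le_M_up[OF p] ab by blast
  have pC: "packed k C" using packed_csteps[OF packed_transpose[OF p] C(1)] .
  have pB: "packed k B" using le_M_packed[OF ab p] .
  have tB: "transpose B = C" using C(2) transpose_transpose_sqm[OF packed_sqm[OF pC]] by simp
  have lB: "length B = length A"
    using C(2) length_transpose_sqm[OF packed_sqm[OF pC]] csteps_length[OF C(1)]
      length_transpose_sqm[OF packed_sqm[OF p]] by simp
  obtain D where D: "(cstep (length B))\<^sup>*\<^sup>* (transpose B) D" "A = transpose D" using le_M_up[OF pB] ba by blast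
  have pD: "packed k D" using packed_csteps[OF packed_transpose[OF pB] D(1)] .
  have tA: "transpose A = D" using D(2) transpose_transpose_sqm[OF packed_sqm[OF pD]] by simp
  have "(cstep (length A))\<^sup>*\<^sup>* C (transpose A)" using D(1) tB tA lB by simp
  hence "transpose A = C" using csteps_antisym[OF good_transpose[OF p] C(1)] by blast
  thus ?thesis using C(2) transpose_transpose_sqm[OF packed_sqm[OF p]] by simp
qed

lemma E_Nil: "E k [] = F []"
proof (rule ext)
  fix M
  have "le_M k [] M \<longleftrightarrow> M = []"
  proof
    assume "le_M k [] M"
    then obtain C where "(cstep 0)\<^sup>*\<^sup>* [] C" "M = transpose C" using le_M_up[OF packed_Nil, of k M] by auto
    thus "M = []" using csteps_length by fastforce
  qed (simp add: le_M_def)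
  thus "E k [] M = F [] M" by (simp add: E_def F_def packed_Nil)
qed

lemma H_Nil: "H k [] = F []"
proof (rule ext)
  fix M
  have "le_M k M [] \<longleftrightarrow> M = []"
  proof
    assume "le_M k M []"
    then obtain C where "(cstep 0)\<^sup>*\<^sup>* C []" "M = transpose C" using le_M_down[OF packed_Nil, of k M] by auto
    thus "M = []" using csteps_length by fastforce
  qed (simp add: le_M_def)
  thus "H k [] M = F [] M" by (simp add: H_def F_def packed_Nil)
qed

lemma sum_unique_pair:
  assumes f1: "finite S1" and f2: "finite S2" and u: "\<And>x y. x \<in> S1 \<Longrightarrow> y \<in> S2 \<Longrightarrow> P x y \<Longrightarrow> x = x0 \<and> y = y0"
    and x0: "x0 \<in> S1" and y0: "y0 \<in> S2" and p: "P x0 y0"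
  shows "(\<Sum>x\<in>S1. \<Sum>y\<in>S2. if P x y then 1 else 0) = (1::'a::field)"
proof -
  have "(\<Sum>y\<in>S2. if P x y then 1 else 0) = (if x = x0 then 1 else (0::'a))" if x: "x \<in> S1" for x
  proof (cases "x = x0")
    case True
    have "(\<Sum>y\<in>S2. if P x y then 1 else (0::'a)) = (\<Sum>y\<in>S2. if y = y0 then 1 else 0)"
    proof (rule sum.cong[OF refl])
      fix y assume y: "y \<in> S2"
      have "P x y \<longleftrightarrow> y = y0" using u[OF x y] p True by blast
      thus "(if P x y then 1 else (0::'a)) = (if y = y0 then 1 else 0)" by simp
    qed
    also have "\<dots> = 1" using sum.delta[OF f2, of y0 "\<lambda>_. (1::'a)"] y0 by simp
    finally show ?thesis using True by simp
  next
    case False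
    have "\<forall>y\<in>S2. \<not> P x y" using u[OF x] False by blast
    thus ?thesis using False by simp
  qed
  hence "(\<Sum>x\<in>S1. \<Sum>y\<in>S2. if P x y then 1 else (0::'a)) = (\<Sum>x\<in>S1. if x = x0 then 1 else 0)"
    by (rule sum.cong[OF refl])
  also have "\<dots> = 1" using sum.delta[OF f1, of x0 "\<lambda>_. (1::'a)"] x0 by simp
  finally show ?thesis .
qed

lemma pm_mult_ind:
  assumes "\<And>M. x M = (if M \<in> S1 then 1 else 0)" "\<And>M. y M = (if M \<in> S2 then 1 else 0)"
  shows "pm_mult x y M = (\<Sum>M1\<in>S1. \<Sum>M2\<in>S2. if M \<in> Sh_c M1 M2 then 1 else (0::'a::field))"
proof -
  have "{M. x M \<noteq> 0} = S1" "{M. y M \<noteq> 0} = S2" using assms by auto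
  thus ?thesis unfolding pm_mult_def using assms by (auto intro!: sum.cong)
qed

lemma prodE:
  assumes pA: "packed k A" and pB: "packed k B"
  shows "pm_mult (E k A) (E k B) = (E k (ov A B) :: nat list list \<Rightarrow> 'a::field)"
proof (rule ext)
  fix M
  have "pm_mult (E k A) (E k B) M = (\<Sum>M1\<in>{X. le_M k A X}. \<Sum>M2\<in>{X. le_M k B X}. if M \<in> Sh_c M1 M2 then 1 else (0::'a))"
    by (rule pm_mult_ind) (simp_all add: E_def pA pB)
  also have "\<dots> = (if le_M k (ov A B) M then 1 else 0)"
  proof (cases "le_M k (ov A B) M")
    case True
    then obtain M1 M2 where o: "le_M k A M1" "le_M k B M2" "M \<in> Sh_c M1 M2" using keyE[OF pA pB] by blast
    have "(\<Sum>M1\<in>{X. le_M k A X}. \<Sum>M2\<in>{X. le_M k B X}. if M \<in> Sh_c M1 M2 then 1 else (0::'a)) = 1"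
    proof (rule sum_unique_pair[OF fin_up[OF pA] fin_up[OF pB]])
      fix x y assume xy: "x \<in> {X. le_M k A X}" "y \<in> {X. le_M k B X}" "M \<in> Sh_c x y"
      have l: "length x = length M1" "length y = length M2"
        using xy(1,2) o(1,2) le_M_length by (metis mem_Collect_eq)+
      show "x = M1 \<and> y = M2"
        using Sh_uniq[OF le_M_packed[OF o(1) pA] le_M_packed[OF o(2) pB] _ _ l o(3) xy(3)]
          le_M_packed xy pA pB by blast
    qed (use o in auto)
    thus ?thesis using True by simp
  next
    case False
    hence "\<forall>M1\<in>{X. le_M k A X}. \<forall>M2\<in>{X. le_M k B X}. M \<notin> Sh_c M1 M2" using keyE[OF pA pB] by blast
    thus ?thesis using False by simp
  qed
  also have "\<dots> = E k (ov A B) M" by (simp add: E_def packed_ov[OF pA pB])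
  finally show "pm_mult (E k A) (E k B) M = (E k (ov A B) M :: 'a)" .
qed

lemma prodH:
  assumes pA: "packed k A" and pB: "packed k B"
  shows "pm_mult (H k A) (H k B) = (H k (un A B) :: nat list list \<Rightarrow> 'a::field)"
proof (rule ext)
  fix M
  have "pm_mult (H k A) (H k B) M = (\<Sum>M1\<in>{X. le_M k X A}. \<Sum>M2\<in>{X. le_M k X B}. if M \<in> Sh_c M1 M2 then 1 else (0::'a))"
    by (rule pm_mult_ind) (simp_all add: H_def pA pB)
  also have "\<dots> = (if le_M k M (un A B) then 1 else 0)"
  proof (cases "le_M k M (un A B)")
    case True
    then obtain M1 M2 where o: "le_M k M1 A" "le_M k M2 B" "M \<in> Sh_c M1 M2" using keyH[OF pA pB] by blast
    have "(\<Sum>M1\<in>{X. le_M k X A}. \<Sum>M2\<in>{X. le_M k X B}. if M \<in> Sh_c M1 M2 then 1 else (0::'a)) = 1"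
    proof (rule sum_unique_pair[OF fin_down[OF pA] fin_down[OF pB]])
      fix x y assume xy: "x \<in> {X. le_M k X A}" "y \<in> {X. le_M k X B}" "M \<in> Sh_c x y"
      have l: "length x = length M1" "length y = length M2"
        using xy(1,2) o(1,2) le_M_length by (metis mem_Collect_eq)+
      show "x = M1 \<and> y = M2"
        using Sh_uniq[OF le_M_packed_back[OF o(1) pA] le_M_packed_back[OF o(2) pB] _ _ l o(3) xy(3)]
          le_M_packed_back xy pA pB by blast
    qed (use o in auto)
    thus ?thesis using True by simp
  next
    case False
    hence "\<forall>M1\<in>{X. le_M k X A}. \<forall>M2\<in>{X. le_M k X B}. M \<notin> Sh_c M1 M2" using keyH[OF pA pB] by blast
    thus ?thesis using False by simp
  qed
  also have "\<dots> = H k (un A B) M" by (simp add: H_def packed_un[OF pA pB])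
  finally show "pm_mult (H k A) (H k B) M = (H k (un A B) M :: 'a)" .
qed



lemma ov_Nil_right[simp]: "ov M [] = M" by (simp add: ov_def)
lemma ov_Nil_left[simp]: "ov [] M = M" by (simp add: ov_def)
lemma un_Nil_right[simp]: "un M [] = M" by (simp add: un_def)
lemma un_Nil_left[simp]: "un [] M = M" by (simp add: un_def)

lemma ov_assoc: "ov (ov A B) C = ov A (ov B C)"
  by (simp add: ov_def replicate_add length_ov)

lemma rep_comm: "replicate a x @ replicate b x = replicate b x @ replicate a x"
  by (simp add: replicate_add[symmetric] add.commute)

lemma un_assoc: "un (un A B) C = un A (un B C)"
  by (simp add: un_def replicate_add length_un rep_comm)

lemma foldr_ov: "foldr ov w X = ov (foldr ov w []) X"
  by (induction w) (simp_all add: ov_assoc)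

lemma foldr_un: "foldr un w X = un (foldr un w []) X"
  by (induction w) (simp_all add: un_assoc)

definition Sconn :: "nat \<Rightarrow> nat list list set" where "Sconn k = {M. packed k M \<and> connected_pm k M}"
definition Santi :: "nat \<Rightarrow> nat list list set" where "Santi k = {M. packed k M \<and> anticonnected_pm k M}"

lemma packed_foldr_ov: "w \<in> lists {M. packed k M} \<Longrightarrow> packed k (foldr ov w [])"
  by (induction w) (auto simp: packed_Nil packed_ov)

lemma packed_foldr_un: "w \<in> lists {M. packed k M} \<Longrightarrow> packed k (foldr un w [])"
  by (induction w) (auto simp: packed_Nil packed_un)

lemma ov_factor: "packed k M \<Longrightarrow> \<exists>w\<in>lists (Sconn k). foldr ov w [] = M"
proof (induction "length M" arbitrary: M rule: less_induct)
  case less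
  show ?case
  proof (cases "M = []")
    case True thus ?thesis by (intro bexI[of _ "[]"]) auto
  next
    case ne: False
    show ?thesis
    proof (cases "connected_pm k M")
      case True thus ?thesis using less.prems by (intro bexI[of _ "[M]"]) (auto simp: Sconn_def)
    next
      case False
      then obtain M1 M2 where m: "packed k M1" "packed k M2" "M = ov M1 M2" "M1 \<noteq> M" "M2 \<noteq> M"
        using ne unfolding connected_pm_def by blast
      have "M2 \<noteq> []" using m(3,4) by auto
      hence l1: "length M1 < length M" using m(3) by (simp add: length_ov)
      have "M1 \<noteq> []" using m(3,5) by auto
      hence l2: "length M2 < length M" using m(3) by (simp add: length_ov)
      obtain w1 where w1: "w1 \<in> lists (Sconn k)" "foldr ov w1 [] = M1" using less.hyps[OF l1 m(1)] by blast
      obtain w2 where w2: "w2 \<in> lists (Sconn k)" "foldr ov w2 [] = M2" using less.hyps[OF l2 m(2)] by blast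
      have "foldr ov (w1 @ w2) [] = M" using w1 w2 m(3) foldr_ov[of w1 "foldr ov w2 []"] by simp
      thus ?thesis using w1(1) w2(1) by (intro bexI[of _ "w1 @ w2"]) auto
    qed
  qed
qed

lemma packed_ov_right:
  assumes p: "packed k (ov A B)" and pA: "packed k A" and lB: "\<forall>r\<in>set B. length r = length B"
  shows "packed k B"
proof -
  have lA: "\<forall>r\<in>set A. length r = length A" using pA unfolding packed_def by blast
  have rows: "\<forall>r\<in>set B. length r = length B \<and> (\<forall>x\<in>set r. x \<le> k) \<and> (\<exists>x\<in>set r. x \<noteq> 0)"
  proof
    fix r assume r: "r \<in> set B"
    hence "replicate (length A) 0 @ r \<in> set (ov A B)" unfolding ov_def by auto
    hence "(\<forall>x\<in>set (replicate (length A) 0 @ r). x \<le> k) \<and> (\<exists>x\<in>set (replicate (length A) 0 @ r). x \<noteq> 0)"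
      using p unfolding packed_def by blast
    thus "length r = length B \<and> (\<forall>x\<in>set r. x \<le> k) \<and> (\<exists>x\<in>set r. x \<noteq> 0)" using lB r by auto
  qed
  have cols: "\<exists>r\<in>set B. r ! j \<noteq> 0" if j: "j < length B" for j
  proof -
    have "length A + j < length (ov A B)" using j by (simp add: length_ov)
    then obtain r where r: "r \<in> set (ov A B)" "r ! (length A + j) \<noteq> 0" using p unfolding packed_def by blast
    from r(1) consider (a) r0 where "r0 \<in> set A" "r = r0 @ replicate (length B) 0"
      | (b) r0 where "r0 \<in> set B" "r = replicate (length A) 0 @ r0" unfolding ov_def by auto
    thus ?thesis
    proof cases
      case a
      hence "r ! (length A + j) = 0" using lA j by (simp add: nth_append)
      thus ?thesis using r(2) by simp
    next
      case b
      thus ?thesis using r(2) by (auto simp: nth_append)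
    qed
  qed
  show ?thesis unfolding packed_def using rows cols by blast
qed

lemma take_pad: "length r = p \<Longrightarrow> p \<le> q \<Longrightarrow> q \<le> p + m \<Longrightarrow> take q (r @ replicate m (0::nat)) = r @ replicate (q - p) 0"
proof -
  assume a: "length r = p" "p \<le> q" "q \<le> p + m"
  have "min (q - p) m = q - p" using a by simp
  thus ?thesis using a by (simp add: take_append)
qed

lemma ov_block:
  assumes pa: "packed k a" and pb: "packed k b" and pX: "packed k X" and pY: "packed k Y"
    and e: "ov a X = ov b Y" and le: "length a \<le> length b"
  shows "b = ov a (map (take (length b - length a)) (take (length b - length a) X))"
proof -
  define p q where "p = length a" and "q = length b"
  have la: "\<forall>r\<in>set a. length r = p" using pa unfolding packed_def p_def by blast
  have lb: "\<forall>r\<in>set b. length r = q" using pb unfolding packed_def q_def by blast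
  have lX: "\<forall>r\<in>set X. length r = length X" using pX unfolding packed_def by blast
  have len: "p + length X = q + length Y" using arg_cong[OF e, of length] by (simp add: length_ov p_def q_def)
  have "b = map (take q) (take q (ov b Y))"
  proof -
    have "take q (ov b Y) = map (\<lambda>r. r @ replicate (length Y) 0) b" unfolding ov_def q_def by simp
    thus ?thesis using lb by (simp add: map_idI)
  qed
  also have "\<dots> = map (take q) (take q (ov a X))" using e by simp
  also have "take q (ov a X) = map (\<lambda>r. r @ replicate (length X) 0) a @
      take (q - p) (map (\<lambda>r. replicate p 0 @ r) X)"
    unfolding ov_def p_def using le p_def q_def by (simp add: take_append)
  also have "map (take q) (map (\<lambda>r. r @ replicate (length X) 0) a @
      take (q - p) (map (\<lambda>r. replicate p 0 @ r) X)) =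
      map (\<lambda>r. r @ replicate (q - p) 0) a @ map (\<lambda>r. replicate p 0 @ r) (map (take (q - p)) (take (q - p) X))"
  proof -
    have "map (take q) (map (\<lambda>r. r @ replicate (length X) 0) a) = map (\<lambda>r. r @ replicate (q - p) 0) a"
      using la le len p_def q_def take_pad[of _ p q "length X"] by (auto intro!: map_cong)
    moreover have "map (take q) (take (q - p) (map (\<lambda>r. replicate p 0 @ r) X)) =
       map (\<lambda>r. replicate p 0 @ r) (map (take (q - p)) (take (q - p) X))"
      using le p_def q_def by (simp add: take_map)
    ultimately show ?thesis by simp
  qed
  also have "\<dots> = ov a (map (take (q - p)) (take (q - p) X))"
    unfolding ov_def p_def using len le p_def q_def by simp
  finally show ?thesis unfolding p_def q_def .
qed

lemma ov_cancel_half: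
  assumes pa: "packed k a" and pb: "packed k b" and pX: "packed k X" and pY: "packed k Y"
    and ca: "connected_pm k a" and cb: "connected_pm k b"
    and e: "ov a X = ov b Y" and le: "length a \<le> length b"
  shows "a = b"
proof -
  define Z where "Z = map (take (length b - length a)) (take (length b - length a) X)"
  have b: "b = ov a Z" using ov_block[OF pa pb pX pY e le] Z_def by simp
  have len: "length a + length X = length b + length Y" using arg_cong[OF e, of length] by (simp add: length_ov)
  have lZ: "length Z = length b - length a" using len Z_def by simp
  have lX: "\<forall>r\<in>set X. length r = length X" using pX unfolding packed_def by blast
  have "\<forall>r\<in>set Z. length r = length Z" unfolding Z_def using lZ lX len Z_def
    by (auto dest!: in_set_takeD)
  hence pZ: "packed k Z" using packed_ov_right[of k a Z] pb b pa by simp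
  have "a = b \<or> Z = b" using cb pa pZ b unfolding connected_pm_def by blast
  moreover have "a \<noteq> []" using ca unfolding connected_pm_def by simp
  hence "length Z < length b" using lZ le by (cases a) auto
  hence "Z \<noteq> b" by auto
  ultimately show ?thesis by blast
qed

lemma ov_cancel:
  assumes pa: "packed k a" and pb: "packed k b" and pX: "packed k X" and pY: "packed k Y"
    and ca: "connected_pm k a" and cb: "connected_pm k b"
    and e: "ov a X = ov b Y"
  shows "a = b \<and> X = Y"
proof -
  have ab: "a = b"
  proof (cases "length a \<le> length b")
    case True thus ?thesis using ov_cancel_half[OF pa pb pX pY ca cb e] by simp
  next
    case False thus ?thesis using ov_cancel_half[OF pb pa pY pX cb ca e[symmetric]] by simp
  qed
  have "X = map (drop (length a)) (drop (length a) (ov a X))" unfolding ov_def by (simp add: comp_def)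
  also have "\<dots> = Y" using e ab unfolding ov_def by (simp add: comp_def)
  finally show ?thesis using ab by simp
qed

lemma ov_unique: "w \<in> lists (Sconn k) \<Longrightarrow> w' \<in> lists (Sconn k) \<Longrightarrow> foldr ov w [] = foldr ov w' [] \<Longrightarrow> w = w'"
proof (induction w arbitrary: w')
  case Nil
  show ?case
  proof (cases w')
    case (Cons b v)
    hence "b \<noteq> []" using Nil.prems(2) by (auto simp: Sconn_def connected_pm_def)
    hence "foldr ov w' [] \<noteq> []" using Cons by (auto simp: ov_def)
    thus ?thesis using Nil.prems(3) by simp
  qed simp
next
  case (Cons a u)
  show ?case
  proof (cases w')
    case Nil
    have "a \<noteq> []" using Cons.prems(1) by (auto simp: Sconn_def connected_pm_def)
    hence "foldr ov (a # u) [] \<noteq> []" by (auto simp: ov_def)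
    thus ?thesis using Cons.prems(3) Nil by simp
  next
    case (Cons b v)
    have S: "Sconn k \<subseteq> {M. packed k M}" by (auto simp: Sconn_def)
    have pu: "packed k (foldr ov u [])" using packed_foldr_ov Cons.prems(1) S by (meson listsE lists_mono subsetD)
    have pv: "packed k (foldr ov v [])" using packed_foldr_ov Cons.prems(2) Cons S by (meson listsE lists_mono subsetD)
    have ab: "packed k a" "connected_pm k a" "packed k b" "connected_pm k b"
      using Cons.prems(1,2) Cons by (auto simp: Sconn_def)
    have "a = b \<and> foldr ov u [] = foldr ov v []"
      using ov_cancel[OF ab(1) ab(3) pu pv ab(2) ab(4)] Cons.prems(3) Cons by simp
    thus ?thesis using Cons.IH[of v] Cons.prems Cons by simp
  qed
qed

lemma rev_un: "rev (un A B) = ov (rev B) (rev A)"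
  by (simp add: un_rev_ov)

lemma anti_conn: "anticonnected_pm k M \<longleftrightarrow> connected_pm k (rev M)"
proof
  assume a: "anticonnected_pm k M"
  show "connected_pm k (rev M)" unfolding connected_pm_def
  proof (intro conjI allI impI)
    show "rev M \<noteq> []" using a unfolding anticonnected_pm_def by simp
  next
    fix X Y assume h: "packed k X \<and> packed k Y \<and> rev M = ov X Y"
    have "M = un (rev Y) (rev X)" using arg_cong[OF conjunct2[OF conjunct2[OF h]], of rev] rev_ov by simp
    hence "rev Y = M \<or> rev X = M" using a h packed_rev unfolding anticonnected_pm_def by blast
    thus "X = rev M \<or> Y = rev M" by auto
  qed
next
  assume a: "connected_pm k (rev M)"
  show "anticonnected_pm k M" unfolding anticonnected_pm_def
  proof (intro conjI allI impI)
    show "M \<noteq> []" using a unfolding connected_pm_def by simp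
  next
    fix M1 M2 assume h: "packed k M1 \<and> packed k M2 \<and> M = un M1 M2"
    have "rev M = ov (rev M2) (rev M1)" using h rev_un by simp
    hence "rev M2 = rev M \<or> rev M1 = rev M" using a h packed_rev unfolding connected_pm_def by blast
    thus "M1 = M \<or> M2 = M" by auto
  qed
qed

lemma rev_foldr_ov: "rev (foldr ov w []) = foldr un (rev (map rev w)) []"
proof (induction w)
  case (Cons a w)
  have "rev (foldr ov (a # w) []) = un (foldr un (rev (map rev w)) []) (rev a)"
    using Cons rev_ov by simp
  also have "\<dots> = foldr un (rev (map rev w)) (rev a)" using foldr_un[of "rev (map rev w)" "rev a"] by simp
  also have "\<dots> = foldr un (rev (map rev (a # w))) []" by simp
  finally show ?case .
qed simp

lemma Santi_rev: "a \<in> Sconn k \<Longrightarrow> rev a \<in> Santi k"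
  by (simp add: Sconn_def Santi_def anti_conn packed_rev)

lemma Sconn_rev: "a \<in> Santi k \<Longrightarrow> rev a \<in> Sconn k"
  by (simp add: Sconn_def Santi_def anti_conn packed_rev)

lemma rev_map_rev_inv: "rev (map rev (rev (map rev v))) = (v :: 'b list list)"
  by (simp add: rev_map comp_def)

lemma un_factor: "packed k M \<Longrightarrow> \<exists>v\<in>lists (Santi k). foldr un v [] = M"
proof -
  assume "packed k M"
  hence "packed k (rev M)" by (simp add: packed_rev)
  then obtain w where w: "w \<in> lists (Sconn k)" "foldr ov w [] = rev M" using ov_factor by blast
  have "foldr un (rev (map rev w)) [] = M" using rev_foldr_ov[of w] w(2) by simp
  moreover have "rev (map rev w) \<in> lists (Santi k)" using w(1) Santi_rev by auto
  ultimately show ?thesis by blast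
qed

lemma un_unique: "v \<in> lists (Santi k) \<Longrightarrow> v' \<in> lists (Santi k) \<Longrightarrow> foldr un v [] = foldr un v' [] \<Longrightarrow> v = v'"
proof -
  assume a: "v \<in> lists (Santi k)" "v' \<in> lists (Santi k)" "foldr un v [] = foldr un v' []"
  define w w' where "w = rev (map rev v)" and "w' = rev (map rev v')"
  have ws: "w \<in> lists (Sconn k)" "w' \<in> lists (Sconn k)" using a(1,2) Sconn_rev unfolding w_def w'_def by auto
  have "rev (foldr ov w []) = foldr un v []" "rev (foldr ov w' []) = foldr un v' []"
    using rev_foldr_ov[of w] rev_foldr_ov[of w'] unfolding w_def w'_def rev_map_rev_inv by simp_all
  hence "rev (foldr ov w []) = rev (foldr ov w' [])" using a(3) by simp
  hence "foldr ov w [] = foldr ov w' []" by simp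
  hence "w = w'" using ov_unique ws by blast
  thus "v = v'" using rev_map_rev_inv[of v] rev_map_rev_inv[of v'] unfolding w_def w'_def by metis
qed



lemma generic_free:
  fixes g :: "nat list list \<Rightarrow> nat list list \<Rightarrow> 'a::field"
    and rel :: "nat list list \<Rightarrow> nat list list \<Rightarrow> bool"
    and op :: "nat list list \<Rightarrow> nat list list \<Rightarrow> nat list list"
  assumes g: "\<And>M. g M = (\<lambda>M'. if packed k M \<and> rel M M' then 1 else 0)"
    and refl: "\<And>M. packed k M \<Longrightarrow> rel M M"
    and trans: "\<And>A B C. rel A B \<Longrightarrow> rel B C \<Longrightarrow> rel A C"
    and antisym: "\<And>A B. packed k A \<Longrightarrow> rel A B \<Longrightarrow> rel B A \<Longrightarrow> A = B"
    and fin: "\<And>A. packed k A \<Longrightarrow> finite {B. rel A B}"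
    and relp: "\<And>A B. packed k A \<Longrightarrow> rel A B \<Longrightarrow> packed k B"
    and mult: "\<And>A B. packed k A \<Longrightarrow> packed k B \<Longrightarrow> pm_mult (g A) (g B) = g (op A B)"
    and unit: "g [] = F []"
    and opp: "\<And>A B. packed k A \<Longrightarrow> packed k B \<Longrightarrow> packed k (op A B)"
    and Sp: "\<And>M. M \<in> S \<Longrightarrow> packed k M"
    and fact: "\<And>M. packed k M \<Longrightarrow> \<exists>w\<in>lists S. foldr op w [] = M"
    and uniq: "\<And>w w'. w \<in> lists S \<Longrightarrow> w' \<in> lists S \<Longrightarrow> foldr op w [] = foldr op w' [] \<Longrightarrow> w = w'"
  shows "freely_generates k g S"
proof -
  define m where "m w = foldr op w []" for w
  define U where "U X = {B. rel X B}" for X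
  have pf: "packed k (m w)" if "w \<in> lists S" for w
    using that unfolding m_def by (induction w) (auto simp: packed_Nil opp Sp)
  have mono: "w \<in> lists S \<Longrightarrow> monomial g w = g (m w)" for w
    unfolding m_def
  proof (induction w)
    case Nil thus ?case by (simp add: monomial_def unit)
  next
    case (Cons a w)
    have "monomial g (a # w) = pm_mult (g a) (monomial g w)" by (simp add: monomial_def)
    also have "\<dots> = pm_mult (g a) (g (foldr op w []))" using Cons by simp
    also have "\<dots> = g (op a (foldr op w []))"
    proof -
      have "a \<in> S" "w \<in> lists S" using Cons.prems by auto
      thus ?thesis using mult[of a "foldr op w []"] pf[of w] Sp unfolding m_def by auto
    qed
    finally show ?case by simp
  qed
  have sub: "card (U B) < card (U A)" if A: "packed k A" and r: "rel A B" and ne: "A \<noteq> B" for A B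
  proof (rule psubset_card_mono)
    show "finite (U A)" using fin[OF A] unfolding U_def .
    have "U B \<subseteq> U A" unfolding U_def using trans r by blast
    moreover have "A \<in> U A" "A \<notin> U B" unfolding U_def using refl[OF A] antisym[OF A r] ne by auto
    ultimately show "U B \<subset> U A" by blast
  qed
  have indep: "\<forall>w\<in>W. c w = 0"
    if W: "finite W" "W \<subseteq> lists S" and Z: "\<forall>M. (\<Sum>w\<in>W. c w * monomial g w M) = 0" for W c
  proof (rule ccontr)
    assume "\<not> (\<forall>w\<in>W. c w = 0)"
    define W' where "W' = {w\<in>W. c w \<noteq> 0}"
    have fW': "finite W'" "W' \<noteq> {}" using W(1) \<open>\<not> (\<forall>w\<in>W. c w = 0)\<close> unfolding W'_def by auto
    define K where "K = Max ((\<lambda>w. card (U (m w))) ` W')"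
    have "K \<in> (\<lambda>w. card (U (m w))) ` W'"
      unfolding K_def using fW' by (intro Max_in) auto
    then obtain w0 where w0: "w0 \<in> W'" "card (U (m w0)) = K" by blast
    have mx: "card (U (m w)) \<le> card (U (m w0))" if "w \<in> W'" for w
      using Max_ge[OF finite_imageI[OF fW'(1)] imageI[OF that], of "\<lambda>w. card (U (m w))"] w0(2) unfolding K_def by simp
    have w0W: "w0 \<in> W" "c w0 \<noteq> 0" using w0(1) unfolding W'_def by auto
    have w0S: "w0 \<in> lists S" using w0W(1) W(2) by blast
    define M0 where "M0 = m w0"
    have zero: "c w * monomial g w M0 = 0" if w: "w \<in> W - {w0}" for w
    proof (cases "c w = 0")
      case False
      have wS: "w \<in> lists S" using w W(2) by auto
      have "\<not> rel (m w) M0"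
      proof
        assume r: "rel (m w) M0"
        show False
        proof (cases "m w = M0")
          case True
          hence "w = w0" using uniq[OF wS w0S] unfolding M0_def m_def by simp
          thus False using w by simp
        next
          case False
          have "card (U M0) < card (U (m w))" using sub[OF pf[OF wS] r False] .
          moreover have "w \<in> W'" using w \<open>c w \<noteq> 0\<close> unfolding W'_def by auto
          ultimately show False using mx[of w] unfolding M0_def by simp
        qed
      qed
      thus ?thesis using mono[OF wS] g by simp
    qed simp
    have "(\<Sum>w\<in>W. c w * monomial g w M0) = c w0 * monomial g w0 M0 + (\<Sum>w\<in>W - {w0}. c w * monomial g w M0)"
      using sum.remove[OF W(1) w0W(1)] by blast
    also have "(\<Sum>w\<in>W - {w0}. c w * monomial g w M0) = 0" by (intro sum.neutral ballI zero)
    also have "monomial g w0 M0 = 1"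
      using mono[OF w0S] g refl[OF pf[OF w0S]] pf[OF w0S] unfolding M0_def by simp
    finally have "(\<Sum>w\<in>W. c w * monomial g w M0) = c w0" by simp
    thus False using Z w0W(2) by simp
  qed
  define V where "V = {x. \<exists>W c. finite W \<and> W \<subseteq> lists S \<and> x = (\<lambda>M. \<Sum>w\<in>W. c w * monomial g w M)}"
  have V0: "(\<lambda>M. 0) \<in> V" unfolding V_def by (intro CollectI exI[of _ "{}"]) auto
  have Vadd: "(\<lambda>M. x M + y M) \<in> V" if xV: "x \<in> V" and yV: "y \<in> V" for x y
  proof -
    obtain W1 c1 where 1: "finite W1" "W1 \<subseteq> lists S" "x = (\<lambda>M. \<Sum>w\<in>W1. c1 w * monomial g w M)"
      using xV unfolding V_def by blast
    obtain W2 c2 where 2: "finite W2" "W2 \<subseteq> lists S" "y = (\<lambda>M. \<Sum>w\<in>W2. c2 w * monomial g w M)"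
      using yV unfolding V_def by blast
    define c where "c w = (if w \<in> W1 then c1 w else 0) + (if w \<in> W2 then c2 w else 0)" for w
    have "(\<Sum>w\<in>W1 \<union> W2. c w * monomial g w M) = x M + y M" for M
    proof -
      have "(\<Sum>w\<in>W1 \<union> W2. c w * monomial g w M) =
         (\<Sum>w\<in>W1 \<union> W2. if w \<in> W1 then c1 w * monomial g w M else 0) +
         (\<Sum>w\<in>W1 \<union> W2. if w \<in> W2 then c2 w * monomial g w M else 0)"
      proof -
        have "c w * monomial g w M = (if w \<in> W1 then c1 w * monomial g w M else 0) +
           (if w \<in> W2 then c2 w * monomial g w M else 0)" for w
          unfolding c_def by (simp add: distrib_right)
        hence "(\<Sum>w\<in>W1 \<union> W2. c w * monomial g w M) = (\<Sum>w\<in>W1 \<union> W2. (if w \<in> W1 then c1 w * monomial g w M else 0) +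
           (if w \<in> W2 then c2 w * monomial g w M else 0))" by (intro sum.cong) auto
        thus ?thesis by (simp only: sum.distrib)
      qed
      also have "(\<Sum>w\<in>W1 \<union> W2. if w \<in> W1 then c1 w * monomial g w M else 0) = x M"
        using sum.inter_restrict[of "W1 \<union> W2" "\<lambda>w. c1 w * monomial g w M" W1] 1 2(1)
        by (simp add: Int_absorb1)
      also have "(\<Sum>w\<in>W1 \<union> W2. if w \<in> W2 then c2 w * monomial g w M else 0) = y M"
        using sum.inter_restrict[of "W1 \<union> W2" "\<lambda>w. c2 w * monomial g w M" W2] 2 1(1)
        by (simp add: Int_absorb1)
      finally show ?thesis .
    qed
    thus ?thesis unfolding V_def using 1(1,2) 2(1,2)
      by (intro CollectI exI[of _ "W1 \<union> W2"] exI[of _ c]) auto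
  qed
  have Vscale: "(\<lambda>M. a * x M) \<in> V" if xV: "x \<in> V" for x a
  proof -
    obtain W1 c1 where 1: "finite W1" "W1 \<subseteq> lists S" "x = (\<lambda>M. \<Sum>w\<in>W1. c1 w * monomial g w M)"
      using xV unfolding V_def by blast
    show ?thesis unfolding V_def using 1
      by (intro CollectI exI[of _ W1] exI[of _ "\<lambda>w. a * c1 w"]) (auto simp: sum_distrib_left mult.assoc)
  qed
  have Vsum: "(\<lambda>M. \<Sum>i\<in>I. a i * f i M) \<in> V" if "finite I" "\<forall>i\<in>I. f i \<in> V" for I a f
    using that
  proof (induction I rule: finite_induct)
    case empty thus ?case using V0 by simp
  next
    case (insert i I)
    have "(\<lambda>M. a i * f i M + (\<Sum>i\<in>I. a i * f i M)) \<in> V"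
      using Vadd[OF Vscale[of "f i" "a i"] insert.IH] insert.prems by auto
    thus ?case using insert.hyps by simp
  qed
  have Vg: "g M \<in> V" if pM: "packed k M" for M
  proof -
    obtain w where w: "w \<in> lists S" "m w = M" using fact[OF pM] unfolding m_def by blast
    show ?thesis unfolding V_def using w mono[OF w(1)]
      by (intro CollectI exI[of _ "{w}"] exI[of _ "\<lambda>_. 1"]) auto
  qed
  have VF: "F M \<in> V" if "packed k M" for M
    using that
  proof (induction "card (U M)" arbitrary: M rule: less_induct)
    case less
    have fU: "finite (U M)" using fin[OF less.prems] unfolding U_def .
    have MU: "M \<in> U M" using refl[OF less.prems] unfolding U_def by simp
    have gs: "g M M'' = (\<Sum>M'\<in>U M. F M' M'')" for M''
      using fU less.prems unfolding g F_def U_def by (simp add: sum.delta')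
    have eqF: "F M = (\<lambda>M''. 1 * g M M'' + (\<Sum>M'\<in>U M - {M}. (-1) * F M' M''))"
    proof
      fix M''
      have "g M M'' = F M M'' + (\<Sum>M'\<in>U M - {M}. F M' M'')" unfolding gs using sum.remove[OF fU MU] by blast
      thus "F M M'' = 1 * g M M'' + (\<Sum>M'\<in>U M - {M}. (-1) * F M' M'')" by (simp add: sum_negf)
    qed
    have B: "(\<lambda>M''. (\<Sum>M'\<in>U M - {M}. (-1) * F M' M'')) \<in> V"
    proof (rule Vsum)
      show "finite (U M - {M})" using fU by simp
      show "\<forall>i\<in>U M - {M}. F i \<in> V"
      proof
        fix M' assume M': "M' \<in> U M - {M}"
        have r: "rel M M'" using M' unfolding U_def by simp
        have "card (U M') < card (U M)" using sub[OF less.prems r] M' by auto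
        thus "F M' \<in> V" using less.hyps relp[OF less.prems r] by blast
      qed
    qed
    have A: "(\<lambda>M''. 1 * g M M'') \<in> V" using Vscale[OF Vg[OF less.prems], of 1] .
    show ?case unfolding eqF using Vadd[OF A B] .
  qed
  have span: "x \<in> V" if "x \<in> PM k" for x
  proof -
    define I where "I = {M. x M \<noteq> 0}"
    have I: "finite I" "\<forall>M\<in>I. packed k M" using that unfolding PM_def I_def by auto
    have "x = (\<lambda>M. \<Sum>M'\<in>I. x M' * F M' M)"
    proof
      fix M
      have "(\<Sum>M'\<in>I. x M' * F M' M) = (\<Sum>M'\<in>I. if M = M' then x M' else 0)"
        unfolding F_def by (intro sum.cong) auto
      also have "\<dots> = x M" using I(1) unfolding I_def by (simp add: sum.delta')
      finally show "x M = (\<Sum>M'\<in>I. x M' * F M' M)" by simp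
    qed
    moreover have "(\<lambda>M. \<Sum>M'\<in>I. x M' * F M' M) \<in> V" using Vsum[OF I(1)] VF I(2) by blast
    ultimately show ?thesis by simp
  qed
  show ?thesis unfolding freely_generates_def
    using indep span unfolding V_def by blast
qed

theorem theorem2p4:
  fixes k :: nat
  assumes "k \<ge> 1"
  shows "freely_generates k (E k :: nat list list \<Rightarrow> nat list list \<Rightarrow> 'a::field_char_0)
            {M. packed k M \<and> connected_pm k M}
       \<and> freely_generates k (H k :: nat list list \<Rightarrow> nat list list \<Rightarrow> 'a)
            {M. packed k M \<and> anticonnected_pm k M}"
proof
  show "freely_generates k (E k :: nat list list \<Rightarrow> nat list list \<Rightarrow> 'a::field_char_0)
            {M. packed k M \<and> connected_pm k M}"
  proof (rule generic_free[where rel = "le_M k" and op = ov])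
    show "\<And>M. E k M = (\<lambda>M'. if packed k M \<and> le_M k M M' then 1 else 0)" by (simp add: E_def)
    show "\<And>M. packed k M \<Longrightarrow> le_M k M M" by (simp add: le_M_def)
    show "\<And>A B C. le_M k A B \<Longrightarrow> le_M k B C \<Longrightarrow> le_M k A C" unfolding le_M_def by (rule rtranclp_trans)
    show "\<And>A B. packed k A \<Longrightarrow> le_M k A B \<Longrightarrow> le_M k B A \<Longrightarrow> A = B" by (rule le_M_antisym)
    show "\<And>A. packed k A \<Longrightarrow> finite {B. le_M k A B}" by (rule fin_up)
    show "\<And>A B. packed k A \<Longrightarrow> le_M k A B \<Longrightarrow> packed k B" using le_M_packed by blast
    show "\<And>A B. packed k A \<Longrightarrow> packed k B \<Longrightarrow> pm_mult (E k A) (E k B) = (E k (ov A B) :: _ \<Rightarrow> 'a)"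
      by (rule prodE)
    show "E k [] = F []" by (rule E_Nil)
    show "\<And>A B. packed k A \<Longrightarrow> packed k B \<Longrightarrow> packed k (ov A B)" by (rule packed_ov)
    show "\<And>M. M \<in> {M. packed k M \<and> connected_pm k M} \<Longrightarrow> packed k M" by simp
    show "\<And>M. packed k M \<Longrightarrow> \<exists>w\<in>lists {M. packed k M \<and> connected_pm k M}. foldr ov w [] = M"
      using ov_factor unfolding Sconn_def by blast
    show "\<And>w w'. w \<in> lists {M. packed k M \<and> connected_pm k M} \<Longrightarrow> w' \<in> lists {M. packed k M \<and> connected_pm k M}
        \<Longrightarrow> foldr ov w [] = foldr ov w' [] \<Longrightarrow> w = w'"
      using ov_unique unfolding Sconn_def by blast
  qed
next
  show "freely_generates k (H k :: nat list list \<Rightarrow> nat list list \<Rightarrow> 'a)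
            {M. packed k M \<and> anticonnected_pm k M}"
  proof (rule generic_free[where rel = "\<lambda>M M'. le_M k M' M" and op = un])
    show "\<And>M. H k M = (\<lambda>M'. if packed k M \<and> le_M k M' M then 1 else 0)" by (simp add: H_def)
    show "\<And>M. packed k M \<Longrightarrow> le_M k M M" by (simp add: le_M_def)
    show "\<And>A B C. le_M k B A \<Longrightarrow> le_M k C B \<Longrightarrow> le_M k C A" unfolding le_M_def by (meson rtranclp_trans)
    show "\<And>A B. packed k A \<Longrightarrow> le_M k B A \<Longrightarrow> le_M k A B \<Longrightarrow> A = B" using le_M_antisym by blast
    show "\<And>A. packed k A \<Longrightarrow> finite {B. le_M k B A}" by (rule fin_down)
    show "\<And>A B. packed k A \<Longrightarrow> le_M k B A \<Longrightarrow> packed k B" using le_M_packed_back by blast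
    show "\<And>A B. packed k A \<Longrightarrow> packed k B \<Longrightarrow> pm_mult (H k A) (H k B) = (H k (un A B) :: _ \<Rightarrow> 'a)"
      by (rule prodH)
    show "H k [] = F []" by (rule H_Nil)
    show "\<And>A B. packed k A \<Longrightarrow> packed k B \<Longrightarrow> packed k (un A B)" by (rule packed_un)
    show "\<And>M. M \<in> {M. packed k M \<and> anticonnected_pm k M} \<Longrightarrow> packed k M" by simp
    show "\<And>M. packed k M \<Longrightarrow> \<exists>w\<in>lists {M. packed k M \<and> anticonnected_pm k M}. foldr un w [] = M"
      using un_factor unfolding Santi_def by blast
    show "\<And>w w'. w \<in> lists {M. packed k M \<and> anticonnected_pm k M} \<Longrightarrow> w' \<in> lists {M. packed k M \<and> anticonnected_pm k M}
        \<Longrightarrow> foldr un w [] = foldr un w' [] \<Longrightarrow> w = w'"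
      using un_unique unfolding Santi_def by blast
  qed
qed


end
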